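(* Under the standing assumptions stated in the context, for every fixed $s\in\mathbb N$, $$\frac{\check Z_\beta^{(n_\beta-s)}(0)}{Z_\beta^{(n_\beta)}}=(\rho_\beta)^s\,\mu_\beta(\mathcal S)[1+o(1)],\qquad\beta\to\infty.$$
   Context: Kawasaki setting. Fix $U>0$ and $\Delta$ with $U<\Delta<2U$ and $U/(2U-\Delta)\notin\mathbb N$; $\ell_c=\lceil U/(2U-\Delta)\rceil$. $\Lambda_\beta\subset\mathbb Z^2$: square box of odd side length centred at the origin with periodic boundary conditions. $\rho_\beta=e^{-\beta\Delta}$, $n_\beta=\lceil\rho_\beta|\Lambda_\beta|\rceil$. Assume $|\Lambda_\beta|\rho_\beta\to\infty$ and $|\Lambda_\beta|e^{-\beta\Gamma}\to0$, where $\Gamma=-U\,b+\Delta[\ell_c(\ell_c-1)+2]$ and $b$ is the number of nearest-neighbour pairs inside a proto-critical droplet (a set of $\ell_c(\ell_c-1)+1$ sites forming either an $(\ell_c-2)\times(\ell_c-2)$ square with four bars on its sides of total length $3\ell_c-3$, or an $(\ell_c-1)\times(\ell_c-3)$ rectangle with four bars of total length $3\ell_c-2$). $\mathcal X_\beta^{(m)}=\{\sigma\in\{0,1\}^{\Lambda_\beta}:|\mathrm{supp}[\sigma]|=m\}$. $H_\beta(\sigma)=-U\sum_{\{x,y\}}\sigma(x)\sigma(y)$ (unordered nearest-neighbour pairs); $Z_\beta^{(n_\beta)}=\sum_{\sigma\in\mathcal X_\beta^{(n_\beta)}}e^{-\beta H_\beta(\sigma)}$; $\mu_\beta=e^{-\beta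 H_\beta}/Z_\beta^{(n_\beta)}$ on $\mathcal X_\beta^{(n_\beta)}$. $L_\beta$ odd with $L_\beta^2=e^{(\Delta-\delta_\beta)\beta}$, $\delta_\beta\to0$, $\beta\delta_\beta\to\infty$; $B_{L,L}(x)$: square box of side $L$ centred at $x$. $\mathcal S^{(m)}=\{\sigma\in\mathcal X_\beta^{(m)}:|\mathrm{supp}[\sigma]\cap B_{L_\beta,L_\beta}(x)|\le\ell_c(\ell_c-1)+1\ \forall x\in\Lambda_\beta\}$, $\mathcal S=\mathcal S^{(n_\beta)}$. For $m\le n_\beta$, $\check Z_\beta^{(m)}(0)=\sum e^{-\beta H_\beta(\eta)}$, the sum over all $\eta\in\mathcal S^{(m)}$ with $\mathrm{supp}[\eta]\subset\Lambda_\beta\setminus B_{L_\beta,L_\beta}(0)$. *)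

theory Defs
  imports "HOL-Analysis.Analysis"
begin

definition torus :: "nat \<Rightarrow> (int \<times> int) set" where
  "torus N = {0..<int N} \<times> {0..<int N}"

definition torus_adj :: "nat \<Rightarrow> int \<times> int \<Rightarrow> int \<times> int \<Rightarrow> bool" where
  "torus_adj N x y \<longleftrightarrow> x \<in> torus N \<and> y \<in> torus N \<and> x \<noteq> y \<and>
     ((fst y = (fst x + 1) mod int N \<and> snd y = snd x) \<or>
      (fst x = (fst y + 1) mod int N \<and> snd x = snd y) \<or>
      (snd y = (snd x + 1) mod int N \<and> fst y = fst x) \<or>
      (snd x = (snd y + 1) mod int N \<and> fst x = fst y))"

definition nn_pairs :: "nat \<Rightarrow> (int \<times> int) set \<Rightarrow> (int \<times> int) set set" where
  "nn_pairs N A = {{x, y} | x y. x \<in> A \<and> y \<in> A \<and> torus_adj N x y}"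

text \<open>A configuration \<sigma> is identified with its support supp[\<sigma>].
  Hamiltonian H(\<sigma>) = -U \<Sum>_{x,y nn} \<sigma>(x)\<sigma>(y).\<close>
definition Ham :: "real \<Rightarrow> nat \<Rightarrow> (int \<times> int) set \<Rightarrow> real" where
  "Ham U N A = - U * real (card (nn_pairs N A))"

definition configs :: "nat \<Rightarrow> nat \<Rightarrow> (int \<times> int) set set" where
  "configs N m = {A. A \<subseteq> torus N \<and> card A = m}"

definition cyc_dist :: "nat \<Rightarrow> int \<Rightarrow> int \<Rightarrow> int" where
  "cyc_dist N a b = min ((a - b) mod int N) ((b - a) mod int N)"

definition box :: "nat \<Rightarrow> nat \<Rightarrow> int \<times> int \<Rightarrow> (int \<times> int) set" where
  "box N L x = {y \<in> torus N. cyc_dist N (fst y) (fst x) \<le> (int L - 1) div 2 \<and>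
                              cyc_dist N (snd y) (snd x) \<le> (int L - 1) div 2}"

definition lc :: "real \<Rightarrow> real \<Rightarrow> nat" where
  "lc U \<Delta> = nat \<lceil>U / (2 * U - \<Delta>)\<rceil>"

text \<open>Number of nearest-neighbour pairs in a proto-critical droplet:
  b = 2(\<ell>_c - 1)^2 (both shapes have \<ell>_c(\<ell>_c-1)+1 sites and an \<ell>_c x \<ell>_c,
  resp. (\<ell>_c+1) x (\<ell>_c-1), bounding box, hence perimeter 4\<ell>_c).\<close>
definition proto_b :: "real \<Rightarrow> real \<Rightarrow> nat" where
  "proto_b U \<Delta> = 2 * (lc U \<Delta> - 1)^2"

definition Gamma_crit :: "real \<Rightarrow> real \<Rightarrow> real" where
  "Gamma_crit U \<Delta> = - U * real (proto_b U \<Delta>)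
      + \<Delta> * real (lc U \<Delta> * (lc U \<Delta> - 1) + 2)"

definition Sset :: "real \<Rightarrow> real \<Rightarrow> nat \<Rightarrow> nat \<Rightarrow> nat \<Rightarrow> (int \<times> int) set set" where
  "Sset U \<Delta> N L m = {A \<in> configs N m. \<forall>x \<in> torus N.
      card (A \<inter> box N L x) \<le> lc U \<Delta> * (lc U \<Delta> - 1) + 1}"

definition Zcan :: "real \<Rightarrow> nat \<Rightarrow> real \<Rightarrow> nat \<Rightarrow> real" where
  "Zcan U N \<beta> m = (\<Sum>A \<in> configs N m. exp (- \<beta> * Ham U N A))"

definition mu_can :: "real \<Rightarrow> nat \<Rightarrow> real \<Rightarrow> nat \<Rightarrow> (int \<times> int) set set \<Rightarrow> real" where
  "mu_can U N \<beta> n E = (\<Sum>A \<in> E \<inter> configs N n. exp (- \<beta> * Ham U N A)) / Zcan U N \<beta> n"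

definition Zcheck :: "real \<Rightarrow> real \<Rightarrow> nat \<Rightarrow> nat \<Rightarrow> real \<Rightarrow> nat \<Rightarrow> real" where
  "Zcheck U \<Delta> N L \<beta> m =
     (\<Sum>A \<in> {A \<in> Sset U \<Delta> N L m. A \<subseteq> torus N - box N L (0, 0)}.
        exp (- \<beta> * Ham U N A))"

definition n_part :: "real \<Rightarrow> nat \<Rightarrow> real \<Rightarrow> nat" where
  "n_part \<Delta> N \<beta> = nat \<lceil>exp (- \<beta> * \<Delta>) * real (card (torus N))\<rceil>"

end

theory Submission
  imports Defs
begin



lemma cd_sym: "cyc_dist N a b = cyc_dist N b a"
  unfolding cyc_dist_def by (simp add: min.commute)

lemma cd_nonneg: "N > 0 \<Longrightarrow> cyc_dist N a b \<ge> 0"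
  unfolding cyc_dist_def by simp

lemma cd_basic:
  assumes "N > 0"
  obtains r t where "a - b = int N * t + r" "0 \<le> r" "r < int N"
    "cyc_dist N a b = min r (if r = 0 then 0 else int N - r)"
proof -
  have n: "int N > 0" using assms by simp
  have dt: "a - b = int N * ((a - b) div int N) + (a - b) mod int N" by simp
  have r0: "0 \<le> (a - b) mod int N" "(a - b) mod int N < int N" using n by simp_all
  have neg: "(b - a) mod int N = (if (a - b) mod int N = 0 then 0 else int N - (a - b) mod int N)"
    using zmod_zminus1_eq_if[of "a - b" "int N"] by simp
  have cd: "cyc_dist N a b = min ((a - b) mod int N) (if (a - b) mod int N = 0 then 0 else int N - (a - b) mod int N)"
    unfolding cyc_dist_def using neg by simp
  show ?thesis by (rule that[OF dt r0 cd])
qed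

lemma cd_le:
  assumes "N > 0" shows "cyc_dist N a b \<le> \<bar>a - b - q * int N\<bar>"
proof -
  obtain r t where dt: "a - b = int N * t + r" and r0: "0 \<le> r" "r < int N"
    and cd: "cyc_dist N a b = min r (if r = 0 then 0 else int N - r)"
    using cd_basic[OF assms] by blast
  have e: "a - b - q * int N = r + (t - q) * int N" using dt by (simp add: algebra_simps)
  have c1: "cyc_dist N a b \<le> r" using cd r0 by (simp add: min_def)
  have c2: "cyc_dist N a b \<le> int N - r" using cd r0 by (simp add: min_def)
  consider "t - q = 0" | "t - q \<ge> 1" | "t - q \<le> -1" by linarith
  then show ?thesis
  proof cases
    case 1 then show ?thesis using e c1 r0 by simp
  next
    case 2
    then have "(t - q) * int N \<ge> int N" using assms by (simp add: mult_le_cancel_right1)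
    then show ?thesis using e c1 r0 by linarith
  next
    case 3
    then have "(t - q) * int N \<le> - int N" using assms
      using mult_right_mono[of "t - q" "-1" "int N"] by simp
    then show ?thesis using e c2 r0 by linarith
  qed
qed

lemma cd_eq:
  assumes "N > 0" shows "\<exists>q. cyc_dist N a b = \<bar>a - b - q * int N\<bar>"
proof -
  obtain r t where dt: "a - b = int N * t + r" and r0: "0 \<le> r" "r < int N"
    and cd: "cyc_dist N a b = min r (if r = 0 then 0 else int N - r)"
    using cd_basic[OF assms] by blast
  have e1: "a - b - t * int N = r" using dt by (simp add: algebra_simps)
  have e2: "a - b - (t+1) * int N = r - int N" using dt by (simp add: algebra_simps)
  show ?thesis
  proof (cases "r \<le> (if r = 0 then 0 else int N - r)")
    case True
    then have "cyc_dist N a b = \<bar>a - b - t * int N\<bar>" using cd e1 r0 by simp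
    then show ?thesis by blast
  next
    case False
    then have "cyc_dist N a b = \<bar>a - b - (t+1) * int N\<bar>" using cd e2 r0 by (simp split: if_splits)
    then show ?thesis by blast
  qed
qed

lemma cd_tri:
  assumes "N > 0" shows "cyc_dist N a c \<le> cyc_dist N a b + cyc_dist N b c"
proof -
  obtain q1 where q1: "cyc_dist N a b = \<bar>a - b - q1 * int N\<bar>" using cd_eq[OF assms] by blast
  obtain q2 where q2: "cyc_dist N b c = \<bar>b - c - q2 * int N\<bar>" using cd_eq[OF assms] by blast
  have "cyc_dist N a c \<le> \<bar>a - c - (q1 + q2) * int N\<bar>" using cd_le[OF assms] by blast
  also have "a - c - (q1 + q2) * int N = (a - b - q1 * int N) + (b - c - q2 * int N)"
    by (simp add: algebra_simps)
  also have "\<bar>\<dots>\<bar> \<le> \<bar>a - b - q1 * int N\<bar> + \<bar>b - c - q2 * int N\<bar>"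
    by (rule abs_triangle_ineq)
  finally show ?thesis using q1 q2 by simp
qed

lemma cd_self: "cyc_dist N a a = 0"
  unfolding cyc_dist_def by simp

lemma cd_zero:
  assumes "N > 0" "0 \<le> a" "a < int N" "0 \<le> b" "b < int N" "cyc_dist N a b = 0"
  shows "a = b"
proof -
  obtain r t where dt: "a - b = int N * t + r" and r0: "0 \<le> r" "r < int N"
    and cd: "cyc_dist N a b = min r (if r = 0 then 0 else int N - r)"
    using cd_basic[OF assms(1)] by blast
  have "r = 0" using cd assms(6) r0 by (simp split: if_splits)
  then have "a - b = int N * t" using dt by simp
  moreover have "t = 0"
  proof (rule ccontr)
    assume "t \<noteq> 0"
    then have "\<bar>int N * t\<bar> \<ge> int N" using assms(1)
      by (simp add: abs_mult mult_le_cancel_left1)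
    then show False using \<open>a - b = int N * t\<close> assms by simp
  qed
  ultimately show ?thesis by simp
qed

lemma cd_succ: "N > 0 \<Longrightarrow> cyc_dist N a ((a + 1) mod int N) \<le> 1"
proof -
  assume N: "N > 0"
  have "cyc_dist N ((a + 1) mod int N) a \<le> \<bar>(a + 1) mod int N - a - (- ((a+1) div int N)) * int N\<bar>"
    by (rule cd_le[OF N])
  also have "(a + 1) mod int N - a - (- ((a+1) div int N)) * int N = 1"
    using minus_div_mult_eq_mod[of "a+1" "int N"] by linarith
  finally show ?thesis by (simp add: cd_sym)
qed

definition Dst :: "nat \<Rightarrow> int \<times> int \<Rightarrow> int \<times> int \<Rightarrow> int" where
  "Dst N x y = max (cyc_dist N (fst x) (fst y)) (cyc_dist N (snd x) (snd y))"

definition tball :: "nat \<Rightarrow> int \<Rightarrow> int \<times> int \<Rightarrow> (int \<times> int) set" where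
  "tball N R x = {y \<in> torus N. Dst N x y \<le> R}"

lemma Dst_sym: "Dst N x y = Dst N y x"
  unfolding Dst_def by (simp add: cd_sym)

lemma Dst_tri: "N > 0 \<Longrightarrow> Dst N x z \<le> Dst N x y + Dst N y z"
  unfolding Dst_def using cd_tri[of N "fst x" "fst z" "fst y"] cd_tri[of N "snd x" "snd z" "snd y"]
  by (simp add: max_def)

lemma Dst_nonneg: "N > 0 \<Longrightarrow> Dst N x y \<ge> 0"
  unfolding Dst_def using cd_nonneg by (simp add: le_max_iff_disj)

lemma Dst_self: "Dst N x x = 0"
  unfolding Dst_def by (simp add: cd_self)

lemma Dst_zero:
  assumes "N > 0" "x \<in> torus N" "y \<in> torus N" "Dst N x y = 0" shows "x = y"
proof -
  have "cyc_dist N (fst x) (fst y) = 0" "cyc_dist N (snd x) (snd y) = 0"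
    using assms(4) cd_nonneg[OF assms(1)] unfolding Dst_def by (smt (verit))+
  then have "fst x = fst y" "snd x = snd y"
    using cd_zero[OF assms(1)] assms(2,3) unfolding torus_def by auto
  then show ?thesis by (simp add: prod_eq_iff)
qed

lemma adj_Dst:
  assumes N: "N > 0" and a: "torus_adj N x y" shows "Dst N x y \<le> 1"
proof -
  have h: "\<And>u v. v = (u + 1) mod int N \<Longrightarrow> cyc_dist N u v \<le> 1 \<and> cyc_dist N v u \<le> 1"
    using cd_succ[OF N] cd_sym by metis
  from a consider "fst y = (fst x + 1) mod int N \<and> snd y = snd x"
    | "fst x = (fst y + 1) mod int N \<and> snd x = snd y"
    | "snd y = (snd x + 1) mod int N \<and> fst y = fst x"
    | "snd x = (snd y + 1) mod int N \<and> fst x = fst y"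
    unfolding torus_adj_def by blast
  then show ?thesis
    unfolding Dst_def
    by cases (use h[of "fst x" "fst y"] h[of "fst y" "fst x"] h[of "snd x" "snd y"] h[of "snd y" "snd x"] in \<open>auto simp: cd_self\<close>)
qed

lemma cd_ball1:
  assumes "N > 0" "R \<ge> 0"
  shows "{t \<in> {0..<int N}. cyc_dist N a t \<le> R} \<subseteq> (\<lambda>i. (a + i) mod int N) ` {-R..R}"
proof
  fix t assume t: "t \<in> {t \<in> {0..<int N}. cyc_dist N a t \<le> R}"
  obtain q where q: "cyc_dist N t a = \<bar>t - a - q * int N\<bar>" using cd_eq[OF assms(1)] by blast
  define i where "i = t - a - q * int N"
  have "i \<in> {-R..R}" using q t i_def cd_sym[of N a t] by auto
  moreover have "(a + i) mod int N = t"
  proof -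
    have eq: "a + i = t + (- q) * int N" using i_def by simp
    have "(a + i) mod int N = t mod int N" unfolding eq by (rule mod_mult_self1)
    then show ?thesis using t by simp
  qed
  ultimately show "t \<in> (\<lambda>i. (a + i) mod int N) ` {-R..R}" by (metis imageI)
qed

lemma card_cd_ball1:
  assumes "N > 0" "R \<ge> 0"
  shows "card {t \<in> {0..<int N}. cyc_dist N a t \<le> R} \<le> nat (2 * R + 1)"
proof -
  have "card {t \<in> {0..<int N}. cyc_dist N a t \<le> R} \<le> card ((\<lambda>i. (a + i) mod int N) ` {-R..R})"
    by (rule card_mono[OF _ cd_ball1[OF assms]]) simp
  also have "\<dots> \<le> card {-R..R}" by (rule card_image_le) simp
  also have "\<dots> = nat (2 * R + 1)" by simp
  finally show ?thesis .
qed

lemma finite_torus: "finite (torus N)"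
  unfolding torus_def by simp

lemma card_torus: "card (torus N) = N * N"
  unfolding torus_def by (simp add: card_cartesian_product)

lemma tball_sub: "tball N R x \<subseteq> {t \<in> {0..<int N}. cyc_dist N (fst x) t \<le> R} \<times> {t \<in> {0..<int N}. cyc_dist N (snd x) t \<le> R}"
  unfolding tball_def torus_def Dst_def by auto

lemma card_tball:
  assumes "N > 0" "R \<ge> 0"
  shows "card (tball N R x) \<le> nat (2 * R + 1) ^ 2"
proof -
  have "card (tball N R x) \<le> card ({t \<in> {0..<int N}. cyc_dist N (fst x) t \<le> R} \<times> {t \<in> {0..<int N}. cyc_dist N (snd x) t \<le> R})"
    by (rule card_mono[OF _ tball_sub]) (rule finite_subset[of _ "{0..<int N} \<times> {0..<int N}"], auto)
  also have "\<dots> \<le> nat (2 * R + 1) * nat (2 * R + 1)"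
    unfolding card_cartesian_product
    by (rule mult_le_mono; rule card_cd_ball1[OF assms])
  finally show ?thesis by (simp add: power2_eq_square)
qed

lemma box_tball: "box N L x = tball N ((int L - 1) div 2) x"
  unfolding box_def tball_def Dst_def by (auto simp: cd_sym)

lemma tball_torus: "tball N R x \<subseteq> torus N"
  unfolding tball_def by auto

lemma box_two:
  assumes "N > 0" "odd L" "y \<in> box N L z" "a \<in> box N L z"
  shows "y \<in> tball N (int L - 1) a"
proof -
  have "Dst N a y \<le> Dst N a z + Dst N z y" by (rule Dst_tri[OF assms(1)])
  moreover have "Dst N a z \<le> (int L - 1) div 2" "Dst N z y \<le> (int L - 1) div 2"
    using assms(3,4) unfolding box_tball tball_def by (auto simp: Dst_sym)
  moreover have "2 * ((int L - 1) div 2) = int L - 1" using assms(2)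
  proof -
    have "even (int L - 1)" using assms(2) by simp
    then show ?thesis by simp
  qed
  ultimately show ?thesis using assms(3) unfolding box_tball tball_def by auto
qed

lemma row_full:
  assumes N: "N > 0" and C: "C \<subseteq> torus N" and x: "x \<in> C"
    and cl: "\<forall>y\<in>C. snd y = snd x \<longrightarrow> ((fst y + 1) mod int N, snd y) \<in> C"
  shows "card C \<ge> N"
proof -
  have x0: "0 \<le> fst x" "fst x < int N" using C x unfolding torus_def by auto
  have all: "((fst x + int i) mod int N, snd x) \<in> C" for i :: nat
  proof (induction i)
    case 0 then show ?case using x0 x by simp
  next
    case (Suc i)
    from cl[rule_format, OF Suc] have "(((fst x + int i) mod int N + 1) mod int N, snd x) \<in> C" by simp
    moreover have "((fst x + int i) mod int N + 1) mod int N = (fst x + int (Suc i)) mod int N"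
    proof -
      have "((fst x + int i) mod int N + 1) mod int N = (fst x + int i + 1) mod int N" by (rule mod_add_left_eq)
      also have "fst x + int i + 1 = fst x + int (Suc i)" by simp
      finally show ?thesis .
    qed
    ultimately show ?case by simp
  qed
  have "{0..<int N} \<times> {snd x} \<subseteq> C"
  proof
    fix p assume p: "p \<in> {0..<int N} \<times> {snd x}"
    define i where "i = nat ((fst p - fst x) mod int N)"
    have "int i = (fst p - fst x) mod int N" using i_def N by simp
    then have "(fst x + int i) mod int N = (fst x + (fst p - fst x)) mod int N"
      by (simp add: mod_add_right_eq)
    also have "\<dots> = fst p" using p by (auto simp: mem_Times_iff)
    finally have e: "(fst x + int i) mod int N = fst p" .
    have "p = ((fst x + int i) mod int N, snd x)" using e p by (auto simp: prod_eq_iff mem_Times_iff)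
    then show "p \<in> C" using all[of i] by simp
  qed
  then have "card ({0..<int N} \<times> {snd x}) \<le> card C"
    by (rule card_mono[OF finite_subset[OF C finite_torus]])
  then show ?thesis by (simp add: card_cartesian_product)
qed

lemma col_full:
  assumes N: "N > 0" and C: "C \<subseteq> torus N" and x: "x \<in> C"
    and cl: "\<forall>y\<in>C. fst y = fst x \<longrightarrow> (fst y, (snd y + 1) mod int N) \<in> C"
  shows "card C \<ge> N"
proof -
  have x0: "0 \<le> snd x" "snd x < int N" using C x unfolding torus_def by auto
  have all: "(fst x, (snd x + int i) mod int N) \<in> C" for i :: nat
  proof (induction i)
    case 0 then show ?case using x0 x by simp
  next
    case (Suc i)
    from cl[rule_format, OF Suc] have "(fst x, ((snd x + int i) mod int N + 1) mod int N) \<in> C" by simp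
    moreover have "((snd x + int i) mod int N + 1) mod int N = (snd x + int (Suc i)) mod int N"
    proof -
      have "((snd x + int i) mod int N + 1) mod int N = (snd x + int i + 1) mod int N" by (rule mod_add_left_eq)
      also have "snd x + int i + 1 = snd x + int (Suc i)" by simp
      finally show ?thesis .
    qed
    ultimately show ?case by simp
  qed
  have "{fst x} \<times> {0..<int N} \<subseteq> C"
  proof
    fix p assume p: "p \<in> {fst x} \<times> {0..<int N}"
    define i where "i = nat ((snd p - snd x) mod int N)"
    have "int i = (snd p - snd x) mod int N" using i_def N by simp
    then have "(snd x + int i) mod int N = (snd x + (snd p - snd x)) mod int N"
      by (simp add: mod_add_right_eq)
    also have "\<dots> = snd p" using p by (auto simp: mem_Times_iff)
    finally have e: "(snd x + int i) mod int N = snd p" .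
    have "p = (fst x, (snd x + int i) mod int N)" using e p by (auto simp: prod_eq_iff mem_Times_iff)
    then show "p \<in> C" using all[of i] by simp
  qed
  then have "card ({fst x} \<times> {0..<int N}) \<le> card C"
    by (rule card_mono[OF finite_subset[OF C finite_torus]])
  then show ?thesis by (simp add: card_cartesian_product)
qed

lemma H_bound:
  assumes N: "N > 0" and C: "C \<subseteq> torus N" and small: "card C < N"
  shows "card {x\<in>C. ((fst x + 1) mod int N, snd x) \<in> C} + card (snd ` C) \<le> card C"
proof -
  let ?H = "{x\<in>C. ((fst x + 1) mod int N, snd x) \<in> C}"
  have fC: "finite C" using C finite_subset finite_torus by blast
  have "snd ` C \<subseteq> snd ` (C - ?H)"
  proof
    fix v assume "v \<in> snd ` C"
    then obtain x where x: "x \<in> C" "snd x = v" by auto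
    show "v \<in> snd ` (C - ?H)"
    proof (rule ccontr)
      assume "v \<notin> snd ` (C - ?H)"
      then have "\<forall>y\<in>C. snd y = snd x \<longrightarrow> ((fst y + 1) mod int N, snd y) \<in> C"
      proof (intro ballI impI)
        fix y assume y: "y \<in> C" "snd y = snd x" and nv: "v \<notin> snd ` (C - ?H)"
        show "((fst y + 1) mod int N, snd y) \<in> C"
        proof (rule ccontr)
          assume "((fst y + 1) mod int N, snd y) \<notin> C"
          then have "y \<in> C - ?H" using y by simp
          then have "v \<in> snd ` (C - ?H)" using y x by (intro image_eqI[of v snd y]) simp_all
          then show False using nv by simp
        qed
      qed
      then have "card C \<ge> N" using row_full[OF N C x(1)] by blast
      then show False using small by simp
    qed
  qed
  then have "card (snd ` C) \<le> card (snd ` (C - ?H))" by (rule card_mono[OF finite_imageI[OF finite_Diff[OF fC]]])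
  also have "\<dots> \<le> card (C - ?H)" by (rule card_image_le[OF finite_Diff[OF fC]])
  also have "\<dots> = card C - card ?H" by (rule card_Diff_subset) (use fC in simp_all)
  finally have "card (snd ` C) \<le> card C - card ?H" .
  moreover have "card ?H \<le> card C" by (rule card_mono[OF fC]) blast
  ultimately show ?thesis by linarith
qed

lemma V_bound:
  assumes N: "N > 0" and C: "C \<subseteq> torus N" and small: "card C < N"
  shows "card {x\<in>C. (fst x, (snd x + 1) mod int N) \<in> C} + card (fst ` C) \<le> card C"
proof -
  let ?H = "{x\<in>C. (fst x, (snd x + 1) mod int N) \<in> C}"
  have fC: "finite C" using C finite_subset finite_torus by blast
  have "fst ` C \<subseteq> fst ` (C - ?H)"
  proof
    fix v assume "v \<in> fst ` C"
    then obtain x where x: "x \<in> C" "fst x = v" by auto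
    show "v \<in> fst ` (C - ?H)"
    proof (rule ccontr)
      assume "v \<notin> fst ` (C - ?H)"
      then have "\<forall>y\<in>C. fst y = fst x \<longrightarrow> (fst y, (snd y + 1) mod int N) \<in> C"
      proof (intro ballI impI)
        fix y assume y: "y \<in> C" "fst y = fst x" and nv: "v \<notin> fst ` (C - ?H)"
        show "(fst y, (snd y + 1) mod int N) \<in> C"
        proof (rule ccontr)
          assume "(fst y, (snd y + 1) mod int N) \<notin> C"
          then have "y \<in> C - ?H" using y by simp
          then have "v \<in> fst ` (C - ?H)" using y x by (intro image_eqI[of v fst y]) simp_all
          then show False using nv by simp
        qed
      qed
      then have "card C \<ge> N" using col_full[OF N C x(1)] by blast
      then show False using small by simp
    qed
  qed
  then have "card (fst ` C) \<le> card (fst ` (C - ?H))" by (rule card_mono[OF finite_imageI[OF finite_Diff[OF fC]]])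
  also have "\<dots> \<le> card (C - ?H)" by (rule card_image_le[OF finite_Diff[OF fC]])
  also have "\<dots> = card C - card ?H" by (rule card_Diff_subset) (use fC in simp_all)
  finally have "card (fst ` C) \<le> card C - card ?H" .
  moreover have "card ?H \<le> card C" by (rule card_mono[OF fC]) blast
  ultimately show ?thesis by linarith
qed

lemma nn_sub:
  "nn_pairs N C \<subseteq> (\<lambda>x. {x, ((fst x + 1) mod int N, snd x)}) ` {x\<in>C. ((fst x + 1) mod int N, snd x) \<in> C}
     \<union> (\<lambda>x. {x, (fst x, (snd x + 1) mod int N)}) ` {x\<in>C. (fst x, (snd x + 1) mod int N) \<in> C}" (is "_ \<subseteq> ?R")
proof
  fix p assume "p \<in> nn_pairs N C"
  then obtain x y where p: "p = {x, y}" "x \<in> C" "y \<in> C" "torus_adj N x y"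
    unfolding nn_pairs_def by blast
  from p(4) consider "fst y = (fst x + 1) mod int N \<and> snd y = snd x"
    | "fst x = (fst y + 1) mod int N \<and> snd x = snd y"
    | "snd y = (snd x + 1) mod int N \<and> fst y = fst x"
    | "snd x = (snd y + 1) mod int N \<and> fst x = fst y"
    unfolding torus_adj_def by blast
  then show "p \<in> ?R"
  proof cases
    case 1
    then have "y = ((fst x + 1) mod int N, snd x)" by (simp add: prod_eq_iff)
    then show ?thesis using p by auto
  next
    case 2
    then have "x = ((fst y + 1) mod int N, snd y)" by (simp add: prod_eq_iff)
    then have "p = {y, ((fst y + 1) mod int N, snd y)}" using p by auto
    then show ?thesis using p \<open>x = _\<close> by auto
  next
    case 3
    then have "y = (fst x, (snd x + 1) mod int N)" by (simp add: prod_eq_iff)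
    then show ?thesis using p by auto
  next
    case 4
    then have "x = (fst y, (snd y + 1) mod int N)" by (simp add: prod_eq_iff)
    then have "p = {y, (fst y, (snd y + 1) mod int N)}" using p by auto
    then show ?thesis using p \<open>x = _\<close> by auto
  qed
qed

lemma iso:
  assumes N: "N > 0" and C: "C \<subseteq> torus N" and small: "card C < N"
  shows "card (nn_pairs N C) + card (fst ` C) + card (snd ` C) \<le> 2 * card C"
proof -
  have fC: "finite C" using C finite_subset finite_torus by blast
  let ?H = "{x\<in>C. ((fst x + 1) mod int N, snd x) \<in> C}"
  let ?V = "{x\<in>C. (fst x, (snd x + 1) mod int N) \<in> C}"
  have "card (nn_pairs N C) \<le> card ((\<lambda>x. {x, ((fst x + 1) mod int N, snd x)}) ` ?H
     \<union> (\<lambda>x. {x, (fst x, (snd x + 1) mod int N)}) ` ?V)"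
    by (rule card_mono[OF _ nn_sub]) (use fC in simp)
  also have "\<dots> \<le> card ((\<lambda>x. {x, ((fst x + 1) mod int N, snd x)}) ` ?H)
     + card ((\<lambda>x. {x, (fst x, (snd x + 1) mod int N)}) ` ?V)" by (rule card_Un_le)
  also have "\<dots> \<le> card ?H + card ?V" by (intro add_mono card_image_le) (use fC in simp_all)
  finally show ?thesis using H_bound[OF assms] V_bound[OF assms] by linarith
qed




lemma arith_key:
  fixes a b j l :: nat
  assumes "l \<ge> 2" "j \<le> (a+1)*(b+1)" "j \<le> l*(l-1)+1"
  shows "j - 1 \<le> (a + b) * (l - 1)"
proof (cases "a + b \<ge> l")
  case True
  then have "l * (l - 1) \<le> (a + b) * (l - 1)" by (rule mult_right_mono) simp
  then show ?thesis using assms(3) by linarith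
next
  case False
  have ab: "a * b \<le> (a + b) * (l - 2)"
  proof (cases "a = 0")
    case True then show ?thesis by simp
  next
    case False
    then have "b \<le> l - 2" using \<open>\<not> a + b \<ge> l\<close> by linarith
    then have "a * b \<le> a * (l - 2)" by simp
    also have "\<dots> \<le> (a + b) * (l - 2)" by (simp add: mult_right_mono)
    finally show ?thesis .
  qed
  have "(a+1)*(b+1) = a*b + a + b + 1" by (simp add: algebra_simps)
  moreover have "(a + b) * (l - 1) = (a + b) * (l - 2) + (a + b)"
  proof -
    have "l - 1 = (l - 2) + 1" using assms(1) by simp
    then show ?thesis by (simp add: algebra_simps)
  qed
  ultimately show ?thesis using ab assms(2) by linarith
qed

definition kk :: "real \<Rightarrow> real \<Rightarrow> nat" where
  "kk U \<Delta> = lc U \<Delta> * (lc U \<Delta> - 1) + 1"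

definition eta :: "real \<Rightarrow> real \<Rightarrow> real" where
  "eta U \<Delta> = \<Delta> - 2 * U + U / real (lc U \<Delta> - 1)"

lemma lc_facts:
  assumes "U > 0" "U < \<Delta>" "\<Delta> < 2 * U"
  shows "lc U \<Delta> \<ge> 2" "eta U \<Delta> > 0"
proof -
  define q where "q = U / (2 * U - \<Delta>)"
  have d: "2 * U - \<Delta> > 0" using assms by simp
  have q1: "q > 1" unfolding q_def using assms d by (simp add: field_simps)
  have c: "ceiling q \<ge> 2" using q1 by (simp add: le_ceiling_iff)
  then show l2: "lc U \<Delta> \<ge> 2" unfolding lc_def q_def[symmetric] by linarith
  have cq: "real_of_int (ceiling q) - 1 < q" using ceiling_correct[of q] by simp
  have lq: "real (lc U \<Delta>) = real_of_int (ceiling q)" unfolding lc_def q_def[symmetric] using c by simp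
  have pos: "real (lc U \<Delta> - 1) > 0" using l2 by simp
  have "real (lc U \<Delta> - 1) < q" using cq lq l2 by (simp add: of_nat_diff)
  then have "real (lc U \<Delta> - 1) * (2 * U - \<Delta>) < U" unfolding q_def using d by (simp add: field_simps)
  then have "2 * U - \<Delta> < U / real (lc U \<Delta> - 1)" using pos by (simp add: field_simps)
  then show "eta U \<Delta> > 0" unfolding eta_def by simp
qed

lemma energy_bound:
  assumes U: "U > 0" "U < \<Delta>" "\<Delta> < 2 * U"
    and N: "N > 0" and C: "C \<subseteq> torus N" and small: "card C < N"
    and j2: "2 \<le> card C" and jk: "card C \<le> kk U \<Delta>"
  shows "U * real (card (nn_pairs N C)) \<le> real (card C - 1) * \<Delta> - eta U \<Delta>"
proof -
  define l where "l = lc U \<Delta>"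
  have l2: "l \<ge> 2" and et: "eta U \<Delta> > 0" using lc_facts[OF U] l_def by auto
  define j where "j = card C"
  define r where "r = card (snd ` C)"
  define c where "c = card (fst ` C)"
  define b where "b = card (nn_pairs N C)"
  have fC: "finite C" using C finite_subset finite_torus by blast
  have ne: "C \<noteq> {}" using j2 by auto
  have r1: "r \<ge> 1" unfolding r_def using fC ne by (simp add: Suc_le_eq card_gt_0_iff)
  have c1: "c \<ge> 1" unfolding c_def using fC ne by (simp add: Suc_le_eq card_gt_0_iff)
  have isob: "b + c + r \<le> 2 * j" using iso[OF N C small] b_def c_def r_def j_def by simp
  have "C \<subseteq> fst ` C \<times> snd ` C" by (auto simp: image_iff) force+
  then have jrc: "j \<le> c * r" unfolding j_def c_def r_def
    using card_mono[OF finite_cartesian_product[OF finite_imageI[OF fC] finite_imageI[OF fC]]]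
    by (simp add: card_cartesian_product)
  have key: "j - 1 \<le> ((c - 1) + (r - 1)) * (l - 1)"
    by (rule arith_key[OF l2]) (use jrc c1 r1 jk in \<open>simp_all add: kk_def l_def j_def\<close>)
  define p where "p = (c - 1) + (r - 1)"
  have bp: "real b \<le> 2 * real (j - 1) - real p"
    using isob c1 r1 j2 unfolding p_def j_def by (simp add: of_nat_diff)
  have lpos: "real (l - 1) > 0" using l2 by simp
  have kp: "real (j - 1) \<le> real p * real (l - 1)" using key unfolding p_def
    by (metis of_nat_le_iff of_nat_mult)
  have pp: "real (j - 1) / real (l - 1) \<le> real p" using kp lpos by (simp add: field_simps)
  have "U * real b \<le> U * (2 * real (j - 1) - real (j - 1) / real (l - 1))"
    using bp pp U(1) by (intro mult_left_mono) auto
  also have "\<dots> = real (j - 1) * (2 * U - U / real (l - 1))" by (simp add: field_simps)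
  also have "\<dots> = real (j - 1) * (\<Delta> - eta U \<Delta>)" unfolding eta_def l_def by simp
  also have "\<dots> = real (j - 1) * \<Delta> - real (j - 1) * eta U \<Delta>" by (simp add: algebra_simps)
  also have "\<dots> \<le> real (j - 1) * \<Delta> - eta U \<Delta>"
  proof -
    have "real (j - 1) \<ge> 1" using j2 j_def by simp
    then have "real (j - 1) * eta U \<Delta> \<ge> eta U \<Delta>" using et by simp
    then show ?thesis by simp
  qed
  finally show ?thesis unfolding b_def j_def .
qed




definition w :: "real \<Rightarrow> nat \<Rightarrow> real \<Rightarrow> (int \<times> int) set \<Rightarrow> real" where
  "w U N \<beta> A = exp (- \<beta> * Ham U N A)"

lemma w_eq: "w U N \<beta> A = exp (\<beta> * U * real (card (nn_pairs N A)))"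
  unfolding w_def Ham_def by simp

lemma w_pos: "w U N \<beta> A > 0" unfolding w_def by simp

lemma nn_pairs_sub: "nn_pairs N A \<subseteq> Pow A"
  unfolding nn_pairs_def by auto

lemma finite_nn: "finite A \<Longrightarrow> finite (nn_pairs N A)"
  using nn_pairs_sub finite_subset by blast

lemma nn_mono: "B \<subseteq> A \<Longrightarrow> nn_pairs N B \<subseteq> nn_pairs N A"
  unfolding nn_pairs_def by blast

lemma w_mono:
  assumes "B \<subseteq> A" "finite A" "\<beta> \<ge> 0" "U \<ge> 0"
  shows "w U N \<beta> B \<le> w U N \<beta> A"
proof -
  have "card (nn_pairs N B) \<le> card (nn_pairs N A)"
    by (rule card_mono[OF finite_nn[OF assms(2)] nn_mono[OF assms(1)]])
  then have "\<beta> * U * real (card (nn_pairs N B)) \<le> \<beta> * U * real (card (nn_pairs N A))"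
    using assms(3,4) by (intro mult_left_mono) auto
  then show ?thesis unfolding w_eq by simp
qed

lemma w_split:
  assumes "C \<subseteq> A" "finite A" "\<forall>y\<in>C. \<forall>z\<in>A - C. \<not> torus_adj N y z"
  shows "w U N \<beta> A = exp (\<beta> * U * real (card (nn_pairs N C))) * w U N \<beta> (A - C)"
proof -
  have sym: "torus_adj N x y \<Longrightarrow> torus_adj N y x" for x y
    unfolding torus_adj_def by auto
  have un: "nn_pairs N A = nn_pairs N C \<union> nn_pairs N (A - C)"
  proof
    show "nn_pairs N A \<subseteq> nn_pairs N C \<union> nn_pairs N (A - C)"
    proof
      fix p assume "p \<in> nn_pairs N A"
      then obtain x y where p: "p = {x, y}" "x \<in> A" "y \<in> A" "torus_adj N x y"
        unfolding nn_pairs_def by blast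
      have "(x \<in> C \<and> y \<in> C) \<or> (x \<in> A - C \<and> y \<in> A - C)"
        using p assms(3) sym by blast
      then show "p \<in> nn_pairs N C \<union> nn_pairs N (A - C)"
        unfolding nn_pairs_def using p by blast
    qed
  next
    show "nn_pairs N C \<union> nn_pairs N (A - C) \<subseteq> nn_pairs N A"
      using nn_mono[of C A N] nn_mono[of "A - C" A N] assms(1) by blast
  qed
  have dis: "nn_pairs N C \<inter> nn_pairs N (A - C) = {}"
  proof (rule ccontr)
    assume "nn_pairs N C \<inter> nn_pairs N (A - C) \<noteq> {}"
    then obtain p where "p \<in> nn_pairs N C" "p \<in> nn_pairs N (A - C)" by blast
    then have "p \<subseteq> C" "p \<subseteq> A - C" "p \<noteq> {}" using nn_pairs_sub unfolding nn_pairs_def by blast+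
    then show False by blast
  qed
  have fC: "finite C" using assms(1,2) finite_subset by blast
  have "card (nn_pairs N A) = card (nn_pairs N C) + card (nn_pairs N (A - C))"
    unfolding un by (rule card_Un_disjoint[OF finite_nn[OF fC] finite_nn dis]) (use assms(2) in simp)
  then show ?thesis unfolding w_eq by (simp add: algebra_simps exp_add[symmetric])
qed

lemma sum_bound_pairs:
  fixes f :: "'a \<Rightarrow> real"
  assumes "finite T" "finite I" "\<forall>i\<in>I. finite (T' i)"
    "\<forall>A\<in>T. g A \<in> I \<and> h A \<in> T' (g A)" "inj_on (\<lambda>A. (g A, h A)) T"
    "\<forall>A\<in>T. f A \<le> c (g A) * v (h A)" "\<forall>i\<in>I. c i \<ge> 0" "\<forall>i\<in>I. \<forall>y\<in>T' i. v y \<ge> 0"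
  shows "(\<Sum>A\<in>T. f A) \<le> (\<Sum>i\<in>I. c i * (\<Sum>y\<in>T' i. v y))"
proof -
  let ?\<phi> = "\<lambda>A. (g A, h A)"
  have "(\<Sum>A\<in>T. f A) \<le> (\<Sum>A\<in>T. c (g A) * v (h A))" by (rule sum_mono) (use assms(6) in blast)
  also have "\<dots> = (\<Sum>p\<in>?\<phi> ` T. c (fst p) * v (snd p))"
    by (subst sum.reindex[OF assms(5)]) simp
  also have "\<dots> \<le> (\<Sum>p\<in>Sigma I T'. c (fst p) * v (snd p))"
    by (rule sum_mono2) (use assms in \<open>auto intro!: mult_nonneg_nonneg\<close>)
  also have "\<dots> = (\<Sum>(i,y)\<in>Sigma I T'. c i * v y)" by (simp add: split_def)
  also have "\<dots> = (\<Sum>i\<in>I. \<Sum>y\<in>T' i. c i * v y)"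
    by (rule sum.Sigma[symmetric]) (use assms in auto)
  also have "\<dots> = (\<Sum>i\<in>I. c i * (\<Sum>y\<in>T' i. v y))" by (simp add: sum_distrib_left)
  finally show ?thesis .
qed

lemma finite_configs: "finite (configs N m)"
  unfolding configs_def by (rule finite_subset[of _ "Pow (torus N)"]) (auto simp: finite_torus)

lemma finite_Sset: "finite (Sset U \<Delta> N L m)"
  unfolding Sset_def using finite_configs by simp

lemma Sset_iff: "A \<in> Sset U \<Delta> N L m \<longleftrightarrow> A \<subseteq> torus N \<and> card A = m \<and>
   (\<forall>x\<in>torus N. card (A \<inter> box N L x) \<le> kk U \<Delta>)"
  unfolding Sset_def configs_def kk_def by auto

lemma Sset_finite_mem: "A \<in> Sset U \<Delta> N L m \<Longrightarrow> finite A"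
  unfolding Sset_iff using finite_subset finite_torus by blast

lemma Sset_sub:
  assumes "A \<in> Sset U \<Delta> N L m" "B \<subseteq> A"
  shows "B \<in> Sset U \<Delta> N L (card B)"
proof -
  have fA: "finite A" using Sset_finite_mem[OF assms(1)] .
  show ?thesis unfolding Sset_iff
  proof (intro conjI ballI)
    show "B \<subseteq> torus N" using assms unfolding Sset_iff by blast
    show "card B = card B" ..
    fix x assume x: "x \<in> torus N"
    have "card (B \<inter> box N L x) \<le> card (A \<inter> box N L x)"
      by (rule card_mono) (use fA assms(2) in auto)
    also have "\<dots> \<le> kk U \<Delta>" using assms(1) x unfolding Sset_iff by blast
    finally show "card (B \<inter> box N L x) \<le> kk U \<Delta>" .
  qed
qed




definition W :: "real \<Rightarrow> real \<Rightarrow> nat \<Rightarrow> nat \<Rightarrow> real \<Rightarrow> nat \<Rightarrow> real" where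
  "W U \<Delta> N L \<beta> m = (\<Sum>A\<in>Sset U \<Delta> N L m. w U N \<beta> A)"

lemma W_nonneg: "W U \<Delta> N L \<beta> m \<ge> 0"
  unfolding W_def by (rule sum_nonneg) (simp add: less_imp_le w_pos)

lemma sum_card_Sigma:
  assumes "finite T" "\<forall>A\<in>T. finite A \<and> card A = m"
  shows "real m * (\<Sum>A\<in>T. f A) = (\<Sum>p\<in>Sigma T (\<lambda>A. A). (f (fst p) :: real))"
proof -
  have "real m * (\<Sum>A\<in>T. f A) = (\<Sum>A\<in>T. real (card A) * f A)"
    by (simp add: sum_distrib_left assms(2))
  also have "\<dots> = (\<Sum>A\<in>T. \<Sum>x\<in>A. f A)" by simp
  also have "\<dots> = (\<Sum>(A,x)\<in>Sigma T (\<lambda>A. A). f A)"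
    by (rule sum.Sigma) (use assms in auto)
  also have "\<dots> = (\<Sum>p\<in>Sigma T (\<lambda>A. A). f (fst p))" by (simp add: split_def)
  finally show ?thesis .
qed

context
  fixes U \<Delta> :: real and N L :: nat and \<beta> :: real
  assumes U: "U > 0" "U < \<Delta>" "\<Delta> < 2 * U" and bpos: "\<beta> \<ge> 0" and Npos: "N > 0"
    and Lodd: "odd L"
begin

lemma kk_pos: "kk U \<Delta> \<ge> 1" unfolding kk_def by simp

lemma good_insert:
  assumes A: "A \<in> Sset U \<Delta> N L (m - 1)" and m: "m \<ge> 1"
    and x: "x \<in> torus N - (\<Union>a\<in>A. tball N (int L - 1) a)"
  shows "x \<notin> A" "insert x A \<in> Sset U \<Delta> N L m"
proof -
  have At: "A \<subseteq> torus N" and cA: "card A = m - 1" and fA: "finite A"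
    using A Sset_finite_mem[OF A] unfolding Sset_iff by auto
  show xA: "x \<notin> A"
  proof
    assume "x \<in> A"
    then have "x \<in> tball N (int L - 1) x" using At Lodd unfolding tball_def
      by (auto simp: Dst_self odd_pos)
    then show False using x \<open>x \<in> A\<close> by blast
  qed
  show "insert x A \<in> Sset U \<Delta> N L m" unfolding Sset_iff
  proof (intro conjI ballI)
    show "insert x A \<subseteq> torus N" using At x by auto
    show "card (insert x A) = m" using xA fA cA m by simp
    fix z assume z: "z \<in> torus N"
    show "card (insert x A \<inter> box N L z) \<le> kk U \<Delta>"
    proof (cases "x \<in> box N L z")
      case True
      have "A \<inter> box N L z = {}"
      proof (rule ccontr)
        assume "A \<inter> box N L z \<noteq> {}"
        then obtain a where a: "a \<in> A" "a \<in> box N L z" by blast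
        then have "x \<in> tball N (int L - 1) a" using box_two[OF Npos Lodd True a(2)] by simp
        then show False using x a(1) by blast
      qed
      then have "insert x A \<inter> box N L z = {x}" using True by auto
      then show ?thesis using kk_pos by simp
    next
      case False
      then have "insert x A \<inter> box N L z = A \<inter> box N L z" by auto
      then show ?thesis using A z unfolding Sset_iff by simp
    qed
  qed
qed

lemma card_good:
  assumes A: "A \<in> Sset U \<Delta> N L (m - 1)"
  shows "real (card (torus N - (\<Union>a\<in>A. tball N (int L - 1) a)))
     \<ge> real (N * N) - real (m - 1) * real ((2 * L - 1)^2)"
proof -
  have fA: "finite A" and cA: "card A = m - 1" using Sset_finite_mem[OF A] A unfolding Sset_iff by auto
  let ?B = "\<Union>a\<in>A. tball N (int L - 1) a"
  have L1: "L \<ge> 1" using Lodd by (cases L) auto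
  have fB: "finite ?B" using fA by (auto intro: finite_subset[OF tball_torus finite_torus])
  have "torus N \<subseteq> (torus N - ?B) \<union> ?B" by blast
  then have "card (torus N) \<le> card ((torus N - ?B) \<union> ?B)"
    by (rule card_mono[rotated]) (use fB finite_torus in simp)
  also have "\<dots> \<le> card (torus N - ?B) + card ?B" by (rule card_Un_le)
  finally have c1: "N * N \<le> card (torus N - ?B) + card ?B" by (simp add: card_torus)
  have "card ?B \<le> (\<Sum>a\<in>A. card (tball N (int L - 1) a))" by (rule card_UN_le[OF fA])
  also have "\<dots> \<le> (\<Sum>a\<in>A. (2 * L - 1)^2)"
  proof (rule sum_mono)
    fix a assume "a \<in> A"
    have "card (tball N (int L - 1) a) \<le> nat (2 * (int L - 1) + 1) ^ 2"
      by (rule card_tball[OF Npos]) (use L1 in simp)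
    also have "nat (2 * (int L - 1) + 1) = 2 * L - 1" using L1 by simp
    finally show "card (tball N (int L - 1) a) \<le> (2 * L - 1)^2" .
  qed
  also have "\<dots> = (m - 1) * (2 * L - 1)^2" using cA by simp
  finally have "N * N \<le> card (torus N - ?B) + (m - 1) * (2 * L - 1)^2" using c1 by linarith
  then have "real (N * N) \<le> real (card (torus N - ?B)) + real ((m - 1) * (2 * L - 1)^2)"
    by (metis of_nat_add of_nat_le_iff)
  then show ?thesis by simp
qed

lemma LB:
  assumes m: "m \<ge> 1"
  shows "(real (N * N) - real (m - 1) * real ((2 * L - 1)^2)) * W U \<Delta> N L \<beta> (m - 1)
     \<le> real m * W U \<Delta> N L \<beta> m"
proof -
  let ?S = "\<lambda>m. Sset U \<Delta> N L m"
  let ?w = "w U N \<beta>"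
  let ?G = "\<lambda>A. torus N - (\<Union>a\<in>A. tball N (int L - 1) a)"
  let ?D = "Sigma (?S (m - 1)) ?G"
  let ?\<phi> = "\<lambda>p. (insert (snd p) (fst p), snd p)"
  have fD: "finite ?D" using finite_Sset by (auto intro: finite_subset[OF _ finite_torus])
  have inj: "inj_on ?\<phi> ?D"
  proof (rule inj_onI)
    fix p q assume p: "p \<in> ?D" and q: "q \<in> ?D" and e: "?\<phi> p = ?\<phi> q"
    have "snd p \<notin> fst p" using good_insert(1)[OF _ m] p by (auto simp: mem_Sigma_iff)
    moreover have "snd q \<notin> fst q" using good_insert(1)[OF _ m] q by (auto simp: mem_Sigma_iff)
    ultimately have "fst p = fst q" using e
      by (metis Pair_inject insert_ident)
    then show "p = q" using e by (simp add: prod_eq_iff)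
  qed
  have img: "?\<phi> ` ?D \<subseteq> Sigma (?S m) (\<lambda>A. A)"
    using good_insert(2)[OF _ m] by (auto simp: mem_Sigma_iff)
  have fS: "finite (Sigma (?S m) (\<lambda>A. A))" using finite_Sset Sset_finite_mem by blast
  have "(\<Sum>A\<in>?S (m - 1). (real (N * N) - real (m - 1) * real ((2 * L - 1)^2)) * ?w A)
     \<le> (\<Sum>A\<in>?S (m - 1). real (card (?G A)) * ?w A)"
    by (rule sum_mono, rule mult_right_mono[OF card_good]) (auto intro: less_imp_le[OF w_pos])
  also have "\<dots> = (\<Sum>A\<in>?S (m - 1). \<Sum>x\<in>?G A. ?w A)" by simp
  also have "\<dots> = (\<Sum>(A, x)\<in>?D. ?w A)" by (rule sum.Sigma) (use finite_Sset finite_torus in auto)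
  also have "\<dots> \<le> (\<Sum>p\<in>?D. ?w (fst (?\<phi> p)))"
    by (rule sum_mono) (auto intro!: w_mono simp: Sset_finite_mem mem_Sigma_iff bpos less_imp_le[OF U(1)])
  also have "\<dots> = (\<Sum>p\<in>?\<phi> ` ?D. ?w (fst p))" 
    by (rule sum.reindex[OF inj, of "\<lambda>p. ?w (fst p)", unfolded comp_def, symmetric])
  also have "\<dots> \<le> (\<Sum>p\<in>Sigma (?S m) (\<lambda>A. A). ?w (fst p))"
    by (rule sum_mono2[OF fS img]) (simp add: less_imp_le w_pos)
  also have "\<dots> = real m * W U \<Delta> N L \<beta> m"
  proof -
    have "\<forall>A\<in>?S m. finite A \<and> card A = m"
      using Sset_finite_mem Sset_iff by blast
    then show ?thesis unfolding W_def by (rule sum_card_Sigma[OF finite_Sset, symmetric])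
  qed
  finally have fin: "(\<Sum>A\<in>?S (m - 1). (real (N * N) - real (m - 1) * real ((2 * L - 1)^2)) * ?w A)
     \<le> real m * W U \<Delta> N L \<beta> m" .
  have "(real (N * N) - real (m - 1) * real ((2 * L - 1)^2)) * W U \<Delta> N L \<beta> (m - 1)
    = (\<Sum>A\<in>?S (m - 1). (real (N * N) - real (m - 1) * real ((2 * L - 1)^2)) * ?w A)"
    unfolding W_def by (rule sum_distrib_left)
  then show ?thesis using fin by linarith
qed

end




definition P :: "real \<Rightarrow> real \<Rightarrow> nat \<Rightarrow> nat \<Rightarrow> real \<Rightarrow> nat \<Rightarrow> int \<times> int \<Rightarrow> real" where
  "P U \<Delta> N L \<beta> m x = (\<Sum>A\<in>{A\<in>Sset U \<Delta> N L m. x \<in> A}. w U N \<beta> A)"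

definition Cl :: "real \<Rightarrow> real \<Rightarrow> nat \<Rightarrow> int \<times> int \<Rightarrow> nat \<Rightarrow> (int \<times> int) set set" where
  "Cl U \<Delta> N x m = {C. C \<subseteq> tball N (int (kk U \<Delta>)) x \<and> 2 \<le> card C \<and> card C \<le> kk U \<Delta> \<and> card C \<le> m}"

lemma finite_Cl: "finite (Cl U \<Delta> N x m)"
proof -
  have "Cl U \<Delta> N x m \<subseteq> Pow (tball N (int (kk U \<Delta>)) x)" unfolding Cl_def by auto
  moreover have "finite (Pow (tball N (int (kk U \<Delta>)) x))"
    using finite_subset[OF tball_torus finite_torus] by simp
  ultimately show ?thesis by (rule finite_subset)
qed

lemma total_P:
  "real m * W U \<Delta> N L \<beta> m = (\<Sum>x\<in>torus N. P U \<Delta> N L \<beta> m x)"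
proof -
  have "real m * W U \<Delta> N L \<beta> m = (\<Sum>A\<in>Sset U \<Delta> N L m. real (card A) * w U N \<beta> A)"
    unfolding W_def by (simp add: sum_distrib_left Sset_iff)
  also have "\<dots> = (\<Sum>A\<in>Sset U \<Delta> N L m. \<Sum>x\<in>{x\<in>torus N. x \<in> A}. w U N \<beta> A)"
  proof (rule sum.cong[OF refl])
    fix A assume "A \<in> Sset U \<Delta> N L m"
    then have "{x\<in>torus N. x \<in> A} = A" unfolding Sset_iff by blast
    then show "real (card A) * w U N \<beta> A = (\<Sum>x\<in>{x\<in>torus N. x \<in> A}. w U N \<beta> A)" by simp
  qed
  also have "\<dots> = (\<Sum>x\<in>torus N. \<Sum>A\<in>{A\<in>Sset U \<Delta> N L m. x \<in> A}. w U N \<beta> A)"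
    by (rule sum.swap_restrict[OF finite_Sset finite_torus])
  finally show ?thesis unfolding P_def .
qed

context
  fixes U \<Delta> :: real and N L :: nat and \<beta> :: real
  assumes U: "U > 0" "U < \<Delta>" "\<Delta> < 2 * U" and bpos: "\<beta> \<ge> 0" and Npos: "N > 0"
    and Lodd: "odd L" and Lbig: "int (kk U \<Delta>) + 1 \<le> (int L - 1) div 2"
    and Nbig: "kk U \<Delta> < N"
begin

lemma cluster_exists:
  assumes A: "A \<in> Sset U \<Delta> N L m" and x: "x \<in> A" and z: "z \<in> A" and adj: "torus_adj N x z"
  shows "\<exists>C. C \<subseteq> A \<and> C \<subseteq> tball N (int (kk U \<Delta>)) x \<and> 2 \<le> card C \<and> card C \<le> kk U \<Delta>
     \<and> (\<forall>y\<in>C. \<forall>u\<in>A - C. \<not> torus_adj N y u)"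
proof -
  let ?k = "kk U \<Delta>"
  have At: "A \<subseteq> torus N" and fA: "finite A" using A Sset_finite_mem[OF A] unfolding Sset_iff by auto
  have xt: "x \<in> torus N" using x At by blast
  have boxk: "card (A \<inter> box N L x) \<le> ?k" using A xt unfolding Sset_iff by blast
  have inbox: "y \<in> A \<Longrightarrow> Dst N x y \<le> int ?k + 1 \<Longrightarrow> y \<in> A \<inter> box N L x" for y
  proof -
    assume y: "y \<in> A" "Dst N x y \<le> int ?k + 1"
    have "Dst N x y \<le> (int L - 1) div 2" using y(2) Lbig by linarith
    then have "y \<in> tball N ((int L - 1) div 2) x" unfolding tball_def using y(1) At by blast
    then show ?thesis unfolding box_tball using y(1) by blast
  qed
  have "\<exists>r\<in>{1..int ?k + 1}. \<forall>y\<in>A. Dst N x y \<noteq> r"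
  proof (rule ccontr)
    assume "\<not> ?thesis"
    then have ex: "\<forall>r\<in>{1..int ?k + 1}. \<exists>y\<in>A. Dst N x y = r" by blast
    define f where "f r = (if r = 0 then x else (SOME y. y \<in> A \<and> Dst N x y = r))" for r
    have f: "r \<in> {0..int ?k + 1} \<Longrightarrow> f r \<in> A \<and> Dst N x (f r) = r" for r
    proof (cases "r = 0")
      case True then show ?thesis using x by (simp add: f_def Dst_self)
    next
      case False
      assume "r \<in> {0..int ?k + 1}"
      then have "r \<in> {1..int ?k + 1}" using False by auto
      then have "\<exists>y. y \<in> A \<and> Dst N x y = r" using ex by blast
      then show ?thesis unfolding f_def using False someI_ex[OF \<open>\<exists>y. y \<in> A \<and> Dst N x y = r\<close>] by simp
    qed
    have inj: "inj_on f {0..int ?k + 1}"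
    proof (rule inj_onI)
      fix a b assume a: "a \<in> {0..int ?k + 1}" and b: "b \<in> {0..int ?k + 1}" and e: "f a = f b"
      have "a = Dst N x (f a)" using f[OF a] by simp
      also have "\<dots> = Dst N x (f b)" using e by (rule arg_cong)
      also have "\<dots> = b" using f[OF b] by simp
      finally show "a = b" .
    qed
    have sub: "f ` {0..int ?k + 1} \<subseteq> A \<inter> box N L x"
    proof (rule image_subsetI)
      fix r assume r: "r \<in> {0..int ?k + 1}"
      have fr: "f r \<in> A \<and> Dst N x (f r) = r" by (rule f[OF r])
      have "f r \<in> A" using fr by simp
      moreover have "Dst N x (f r) \<le> int ?k + 1" using fr r by simp
      ultimately show "f r \<in> A \<inter> box N L x" by (rule inbox)
    qed
    have "card (f ` {0..int ?k + 1}) \<le> card (A \<inter> box N L x)"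
      by (rule card_mono[OF _ sub]) (use fA in simp)
    moreover have "card (f ` {0..int ?k + 1}) = ?k + 2"
      using card_image[OF inj] by simp
    ultimately show False using boxk by simp
  qed
  then obtain r where r: "r \<in> {1..int ?k + 1}" "\<forall>y\<in>A. Dst N x y \<noteq> r" by blast
  define C where "C = {y\<in>A. Dst N x y < r}"
  have zt: "z \<in> torus N" using z At by blast
  have "Dst N x z \<le> 1" using adj_Dst[OF Npos adj] .
  moreover have "Dst N x z \<noteq> 0"
  proof
    assume "Dst N x z = 0"
    then have "x = z" using Dst_zero[OF Npos xt zt] by simp
    then show False using adj unfolding torus_adj_def by simp
  qed
  moreover have "Dst N x z \<ge> 0" using Dst_nonneg[OF Npos] .
  ultimately have dz: "Dst N x z = 1" by linarith
  then have r2: "r \<ge> 2"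
  proof -
    have "r \<noteq> 1" using r(2) z dz by blast
    then show ?thesis using r(1) by simp
  qed
  have xC: "x \<in> C" unfolding C_def using x r by (simp add: Dst_self)
  have zC: "z \<in> C" unfolding C_def using z r2 dz by simp
  have xz: "x \<noteq> z" using adj unfolding torus_adj_def by simp
  have fC: "finite C" unfolding C_def using fA by simp
  have "card {x, z} \<le> card C" by (rule card_mono[OF fC]) (use xC zC in simp)
  then have c2: "2 \<le> card C" using xz by simp
  have "C \<subseteq> A \<inter> box N L x" unfolding C_def using inbox r by auto
  then have "card C \<le> card (A \<inter> box N L x)" by (rule card_mono[rotated]) (use fA in simp)
  then have ck: "card C \<le> ?k" using boxk by simp
  have Cb: "C \<subseteq> tball N (int ?k) x" unfolding C_def tball_def using At r by auto
  have cross: "\<forall>y\<in>C. \<forall>u\<in>A - C. \<not> torus_adj N y u"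
  proof (intro ballI notI)
    fix y u assume y: "y \<in> C" and u: "u \<in> A - C" and a: "torus_adj N y u"
    have "Dst N x u \<ge> r" using u unfolding C_def by auto
    moreover have "Dst N x u \<noteq> r" using u r(2) by blast
    moreover have "Dst N x u \<le> Dst N x y + Dst N y u" by (rule Dst_tri[OF Npos])
    moreover have "Dst N y u \<le> 1" by (rule adj_Dst[OF Npos a])
    moreover have "Dst N x y < r" using y unfolding C_def by auto
    ultimately show False by linarith
  qed
  have CA: "C \<subseteq> A" unfolding C_def by blast
  show ?thesis using Cb c2 ck cross CA by blast
qed


lemma iso_bound:
  "(\<Sum>A\<in>{A\<in>Sset U \<Delta> N L m. x \<in> A \<and> \<not> (\<exists>z\<in>A. torus_adj N x z)}. w U N \<beta> A)
     \<le> W U \<Delta> N L \<beta> (m - 1)"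
proof -
  let ?T = "{A\<in>Sset U \<Delta> N L m. x \<in> A \<and> \<not> (\<exists>z\<in>A. torus_adj N x z)}"
  have fT: "finite ?T" using finite_Sset by simp
  have eqw: "w U N \<beta> A = w U N \<beta> (A - {x})" if "A \<in> ?T" for A
  proof -
    have "nn_pairs N {x} = {}" unfolding nn_pairs_def torus_adj_def by auto
    then show ?thesis using w_split[of "{x}" A N U \<beta>] that Sset_finite_mem by auto
  qed
  have inj: "inj_on (\<lambda>A. A - {x}) ?T"
    by (rule inj_onI) (metis (no_types, lifting) insert_Diff mem_Collect_eq)
  have img: "(\<lambda>A. A - {x}) ` ?T \<subseteq> Sset U \<Delta> N L (m - 1)"
  proof (rule image_subsetI)
    fix A assume A: "A \<in> ?T"
    then have "A - {x} \<in> Sset U \<Delta> N L (card (A - {x}))" using Sset_sub[of A U \<Delta> N L m "A - {x}"] by blast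
    moreover have "card (A - {x}) = m - 1" using A Sset_finite_mem[of A] unfolding Sset_iff by auto
    ultimately show "A - {x} \<in> Sset U \<Delta> N L (m - 1)" by simp
  qed
  have "(\<Sum>A\<in>?T. w U N \<beta> A) = (\<Sum>A\<in>?T. w U N \<beta> (A - {x}))" by (rule sum.cong[OF refl eqw])
  also have "\<dots> = (\<Sum>B\<in>(\<lambda>A. A - {x}) ` ?T. w U N \<beta> B)"
    by (rule sum.reindex[OF inj, unfolded comp_def, symmetric])
  also have "\<dots> \<le> W U \<Delta> N L \<beta> (m - 1)" unfolding W_def
    by (rule sum_mono2[OF finite_Sset img]) (simp add: less_imp_le w_pos)
  finally show ?thesis .
qed


lemma NI_bound:
  "(\<Sum>A\<in>{A\<in>Sset U \<Delta> N L m. x \<in> A \<and> (\<exists>z\<in>A. torus_adj N x z)}. w U N \<beta> A)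
     \<le> (\<Sum>C\<in>Cl U \<Delta> N x m. exp (\<beta> * U * real (card (nn_pairs N C))) * W U \<Delta> N L \<beta> (m - card C))"
proof -
  let ?T = "{A\<in>Sset U \<Delta> N L m. x \<in> A \<and> (\<exists>z\<in>A. torus_adj N x z)}"
  let ?good = "\<lambda>A C. C \<subseteq> A \<and> C \<subseteq> tball N (int (kk U \<Delta>)) x \<and> 2 \<le> card C \<and> card C \<le> kk U \<Delta>
     \<and> (\<forall>y\<in>C. \<forall>u\<in>A - C. \<not> torus_adj N y u)"
  define g where "g A = (SOME C. ?good A C)" for A
  have gg: "?good A (g A)" if "A \<in> ?T" for A
  proof -
    from that obtain z where "A \<in> Sset U \<Delta> N L m" "x \<in> A" "z \<in> A" "torus_adj N x z" by blast
    then have "\<exists>C. ?good A C" by (rule cluster_exists)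
    then show ?thesis unfolding g_def by (rule someI_ex)
  qed
  have fT: "finite ?T" using finite_Sset by simp
  show ?thesis unfolding W_def
  proof (rule sum_bound_pairs[where g = g and h = "\<lambda>A. A - g A"])
    show "finite ?T" by (rule fT)
    show "finite (Cl U \<Delta> N x m)" by (rule finite_Cl)
    show "\<forall>C\<in>Cl U \<Delta> N x m. finite (Sset U \<Delta> N L (m - card C))" using finite_Sset by blast
    show "\<forall>A\<in>?T. g A \<in> Cl U \<Delta> N x m \<and> A - g A \<in> Sset U \<Delta> N L (m - card (g A))"
    proof
      fix A assume A: "A \<in> ?T"
      have G: "?good A (g A)" by (rule gg[OF A])
      have AS: "A \<in> Sset U \<Delta> N L m" using A by blast
      have fA: "finite A" by (rule Sset_finite_mem[OF AS])
      have cA: "card A = m" using AS unfolding Sset_iff by blast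
      have "card (g A) \<le> m" using card_mono[OF fA] G cA by metis
      then have "g A \<in> Cl U \<Delta> N x m" unfolding Cl_def using G by blast
      moreover have "A - g A \<in> Sset U \<Delta> N L (card (A - g A))"
        by (rule Sset_sub[OF AS]) blast
      moreover have "card (A - g A) = m - card (g A)"
        using card_Diff_subset[of "g A" A] G fA cA finite_subset by metis
      ultimately show "g A \<in> Cl U \<Delta> N x m \<and> A - g A \<in> Sset U \<Delta> N L (m - card (g A))" by simp
    qed
    show "inj_on (\<lambda>A. (g A, A - g A)) ?T"
    proof (rule inj_onI)
      fix A B assume A: "A \<in> ?T" and B: "B \<in> ?T" and e: "(g A, A - g A) = (g B, B - g B)"
      have "A = g A \<union> (A - g A)" using gg[OF A] by blast
      also have "\<dots> = g B \<union> (B - g B)"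
      proof -
        have e1: "g A = g B" "A - g A = B - g B" using e by auto
        show ?thesis using e1 by metis
      qed
      also have "\<dots> = B" using gg[OF B] by blast
      finally show "A = B" .
    qed
    show "\<forall>A\<in>?T. w U N \<beta> A \<le> exp (\<beta> * U * real (card (nn_pairs N (g A)))) * w U N \<beta> (A - g A)"
    proof
      fix A assume A: "A \<in> ?T"
      have G: "?good A (g A)" by (rule gg[OF A])
      have fA: "finite A" using A Sset_finite_mem by blast
      show "w U N \<beta> A \<le> exp (\<beta> * U * real (card (nn_pairs N (g A)))) * w U N \<beta> (A - g A)"
        using w_split[of "g A" A N U \<beta>] G fA by simp
    qed
    show "\<forall>C\<in>Cl U \<Delta> N x m. exp (\<beta> * U * real (card (nn_pairs N C))) \<ge> 0" by simp
    show "\<forall>C\<in>Cl U \<Delta> N x m. \<forall>B\<in>Sset U \<Delta> N L (m - card C). w U N \<beta> B \<ge> 0"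
      by (simp add: less_imp_le w_pos)
  qed
qed

lemma P_bound:
  "P U \<Delta> N L \<beta> m x \<le> W U \<Delta> N L \<beta> (m - 1)
     + (\<Sum>C\<in>Cl U \<Delta> N x m. exp (\<beta> * U * real (card (nn_pairs N C))) * W U \<Delta> N L \<beta> (m - card C))"
proof -
  let ?T1 = "{A\<in>Sset U \<Delta> N L m. x \<in> A \<and> \<not> (\<exists>z\<in>A. torus_adj N x z)}"
  let ?T2 = "{A\<in>Sset U \<Delta> N L m. x \<in> A \<and> (\<exists>z\<in>A. torus_adj N x z)}"
  have "{A\<in>Sset U \<Delta> N L m. x \<in> A} = ?T1 \<union> ?T2" by blast
  then have "P U \<Delta> N L \<beta> m x = (\<Sum>A\<in>?T1 \<union> ?T2. w U N \<beta> A)" unfolding P_def by simp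
  also have "\<dots> = (\<Sum>A\<in>?T1. w U N \<beta> A) + (\<Sum>A\<in>?T2. w U N \<beta> A)"
    by (rule sum.union_disjoint) (use finite_Sset in auto)
  finally show ?thesis using iso_bound[of m x] NI_bound[of m x] by linarith
qed

end




definition Kc :: "real \<Rightarrow> real \<Rightarrow> nat" where
  "Kc U \<Delta> = 2 ^ ((2 * kk U \<Delta> + 1)^2) * 4 ^ kk U \<Delta>"

lemma card_Cl: "N > 0 \<Longrightarrow> card (Cl U \<Delta> N x m) \<le> 2 ^ ((2 * kk U \<Delta> + 1)^2)"
proof -
  assume N: "N > 0"
  let ?B = "tball N (int (kk U \<Delta>)) x"
  have fB: "finite ?B" using finite_subset[OF tball_torus finite_torus] .
  have "card (Cl U \<Delta> N x m) \<le> card (Pow ?B)"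
    by (rule card_mono) (use fB in \<open>auto simp: Cl_def\<close>)
  also have "\<dots> = 2 ^ card ?B" using card_Pow fB by blast
  also have "\<dots> \<le> 2 ^ ((2 * kk U \<Delta> + 1)^2)"
  proof (rule power_increasing)
    have "card ?B \<le> nat (2 * int (kk U \<Delta>) + 1) ^ 2" by (rule card_tball[OF N]) simp
    also have "nat (2 * int (kk U \<Delta>) + 1) = 2 * kk U \<Delta> + 1" by simp
    finally show "card ?B \<le> (2 * kk U \<Delta> + 1)^2" .
  qed simp
  finally show ?thesis .
qed

context
  fixes U \<Delta> :: real and N L :: nat and \<beta> :: real and n :: nat
  assumes U: "U > 0" "U < \<Delta>" "\<Delta> < 2 * U" and bpos: "\<beta> \<ge> 0" and Npos: "N > 0"
    and Lodd: "odd L" and Lbig: "int (kk U \<Delta>) + 1 \<le> (int L - 1) div 2"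
    and Nbig: "kk U \<Delta> < N"
    and A1: "8 * real n * real L ^ 2 \<le> real N * real N"
    and A2: "real n \<le> 2 * exp (- \<beta> * \<Delta>) * (real N * real N)"
begin

lemma step_down:
  assumes m: "1 \<le> m" "m \<le> n"
  shows "W U \<Delta> N L \<beta> (m - 1) \<le> (2 * real m / (real N * real N)) * W U \<Delta> N L \<beta> m"
proof -
  have L1: "L \<ge> 1" using Lodd by (cases L) auto
  have "real ((2 * L - 1)^2) \<le> 4 * real L ^ 2"
  proof -
    have "(2 * L - 1)^2 \<le> (2 * L)^2" by (rule power_mono) auto
    then have "real ((2 * L - 1)^2) \<le> real ((2 * L)^2)" by (rule of_nat_mono)
    then show ?thesis by (simp add: power_mult_distrib)
  qed
  then have "real (m - 1) * real ((2 * L - 1)^2) \<le> real n * (4 * real L ^ 2)"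
    using m by (intro mult_mono) auto
  then have h: "real (N * N) - real (m - 1) * real ((2 * L - 1)^2) \<ge> real N * real N / 2"
    using A1 by simp
  have W0: "W U \<Delta> N L \<beta> (m - 1) \<ge> 0" by (rule W_nonneg)
  have "real N * real N / 2 * W U \<Delta> N L \<beta> (m - 1)
      \<le> (real (N * N) - real (m - 1) * real ((2 * L - 1)^2)) * W U \<Delta> N L \<beta> (m - 1)"
    by (rule mult_right_mono[OF h W0])
  also have "\<dots> \<le> real m * W U \<Delta> N L \<beta> m" by (rule LB[OF U bpos Npos Lodd m(1)])
  finally have "real N * real N / 2 * W U \<Delta> N L \<beta> (m - 1) \<le> real m * W U \<Delta> N L \<beta> m" .
  moreover have "real N * real N > 0" using Npos by simp
  ultimately show ?thesis by (simp add: field_simps)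
qed

lemma iter_down:
  assumes "j \<le> m" "m \<le> n"
  shows "W U \<Delta> N L \<beta> (m - j) \<le> (2 * real m / (real N * real N)) ^ j * W U \<Delta> N L \<beta> m"
  using assms(1)
proof (induction j)
  case 0 then show ?case by simp
next
  case (Suc j)
  have "W U \<Delta> N L \<beta> (m - Suc j) = W U \<Delta> N L \<beta> ((m - j) - 1)" by simp
  also have "\<dots> \<le> (2 * real (m - j) / (real N * real N)) * W U \<Delta> N L \<beta> (m - j)"
    by (rule step_down) (use Suc.prems assms(2) in auto)
  also have "\<dots> \<le> (2 * real m / (real N * real N)) * W U \<Delta> N L \<beta> (m - j)"
    by (rule mult_right_mono[OF _ W_nonneg]) (use Npos in \<open>simp add: divide_right_mono\<close>)
  also have "\<dots> \<le> (2 * real m / (real N * real N)) * ((2 * real m / (real N * real N)) ^ j * W U \<Delta> N L \<beta> m)"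
    by (rule mult_left_mono) (use Suc in auto)
  also have "\<dots> = (2 * real m / (real N * real N)) ^ Suc j * W U \<Delta> N L \<beta> m" by simp
  finally show ?case .
qed


lemma cluster_term:
  assumes C: "C \<in> Cl U \<Delta> N x m" and m: "m \<le> n"
  shows "exp (\<beta> * U * real (card (nn_pairs N C))) * W U \<Delta> N L \<beta> (m - card C)
    \<le> 4 ^ kk U \<Delta> * exp (- \<beta> * eta U \<Delta>) * exp (- \<beta> * \<Delta>) * W U \<Delta> N L \<beta> m"
proof -
  define j where "j = card C"
  define \<rho> where "\<rho> = exp (- \<beta> * \<Delta>)"
  have Ct: "C \<subseteq> torus N" using C tball_torus unfolding Cl_def by blast
  have j2: "2 \<le> j" and jk: "j \<le> kk U \<Delta>" and jm: "j \<le> m" using C unfolding Cl_def j_def by auto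
  have small: "card C < N" using jk Nbig j_def by simp
  have eb: "U * real (card (nn_pairs N C)) \<le> real (j - 1) * \<Delta> - eta U \<Delta>"
    using energy_bound[OF U Npos Ct small] j2 jk j_def by simp
  have e1: "exp (\<beta> * U * real (card (nn_pairs N C))) \<le> exp (\<beta> * (real (j - 1) * \<Delta> - eta U \<Delta>))"
    using mult_left_mono[OF eb bpos] by (simp add: mult.assoc)
  have r: "2 * real m / (real N * real N) \<le> 4 * \<rho>"
  proof -
    have NN: "real N * real N > 0" using Npos by simp
    have mn: "real m \<le> real n" using m by simp
    have A2': "real n \<le> 2 * (\<rho> * (real N * real N))" using A2 unfolding \<rho>_def by (metis mult.assoc)
    have "2 * real m \<le> 4 * (\<rho> * (real N * real N))" using A2' mn by linarith
    then have "2 * real m \<le> 4 * \<rho> * (real N * real N)" by (metis mult.assoc)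
    then show ?thesis using NN by (simp add: field_simps)
  qed
  have W1: "W U \<Delta> N L \<beta> (m - j) \<le> (4 * \<rho>) ^ j * W U \<Delta> N L \<beta> m"
  proof -
    have "W U \<Delta> N L \<beta> (m - j) \<le> (2 * real m / (real N * real N)) ^ j * W U \<Delta> N L \<beta> m"
      by (rule iter_down[OF jm m])
    also have "\<dots> \<le> (4 * \<rho>) ^ j * W U \<Delta> N L \<beta> m"
      by (intro mult_right_mono power_mono r W_nonneg) (simp add: Npos)
    finally show ?thesis .
  qed
  have key: "exp (\<beta> * (real (j - 1) * \<Delta> - eta U \<Delta>)) * (4 * \<rho>) ^ j = 4 ^ j * exp (- \<beta> * eta U \<Delta>) * \<rho>"
  proof -
    have "\<rho> ^ j = exp (real j * (- \<beta> * \<Delta>))" unfolding \<rho>_def by (rule exp_of_nat_mult[symmetric])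
    moreover have "exp (\<beta> * (real (j - 1) * \<Delta> - eta U \<Delta>)) * exp (real j * (- \<beta> * \<Delta>))
        = exp (- \<beta> * eta U \<Delta>) * \<rho>"
    proof -
      have "real (j - 1) = real j - 1" using j2 by simp
      then have "\<beta> * (real (j - 1) * \<Delta> - eta U \<Delta>) + real j * (- \<beta> * \<Delta>) = - \<beta> * eta U \<Delta> + (- \<beta> * \<Delta>)"
        by (simp add: algebra_simps)
      then show ?thesis unfolding \<rho>_def by (simp add: exp_add[symmetric])
    qed
    ultimately show ?thesis by (simp add: power_mult_distrib)
  qed
  have "exp (\<beta> * U * real (card (nn_pairs N C))) * W U \<Delta> N L \<beta> (m - card C)
      \<le> exp (\<beta> * (real (j - 1) * \<Delta> - eta U \<Delta>)) * ((4 * \<rho>) ^ j * W U \<Delta> N L \<beta> m)"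
    unfolding j_def[symmetric] by (rule mult_mono[OF e1 W1]) (auto intro: W_nonneg)
  also have "\<dots> = 4 ^ j * exp (- \<beta> * eta U \<Delta>) * \<rho> * W U \<Delta> N L \<beta> m"
    using key by (simp add: mult.assoc)
  also have "\<dots> \<le> 4 ^ kk U \<Delta> * exp (- \<beta> * eta U \<Delta>) * \<rho> * W U \<Delta> N L \<beta> m"
    by (intro mult_right_mono power_increasing jk W_nonneg) (auto simp: \<rho>_def)
  finally show ?thesis unfolding \<rho>_def .
qed

definition theta :: real where
  "theta = real (Kc U \<Delta>) * exp (- \<beta> * eta U \<Delta>)"

lemma P_bound2:
  assumes m: "1 \<le> m" "m \<le> n"
  shows "P U \<Delta> N L \<beta> m x \<le> (2 * real m / (real N * real N) + theta * exp (- \<beta> * \<Delta>)) * W U \<Delta> N L \<beta> m"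
proof -
  let ?c = "4 ^ kk U \<Delta> * exp (- \<beta> * eta U \<Delta>) * exp (- \<beta> * \<Delta>) * W U \<Delta> N L \<beta> m"
  have cc: "real (card (Cl U \<Delta> N x m)) \<le> real (2 ^ ((2 * kk U \<Delta> + 1)^2))"
    using card_Cl[OF Npos] by (simp only: of_nat_le_iff)
  have "P U \<Delta> N L \<beta> m x \<le> W U \<Delta> N L \<beta> (m - 1)
     + (\<Sum>C\<in>Cl U \<Delta> N x m. exp (\<beta> * U * real (card (nn_pairs N C))) * W U \<Delta> N L \<beta> (m - card C))"
    by (rule P_bound[OF U bpos Npos Lodd Lbig Nbig])
  also have "\<dots> \<le> (2 * real m / (real N * real N)) * W U \<Delta> N L \<beta> m + (\<Sum>C\<in>Cl U \<Delta> N x m. ?c)"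
    by (intro add_mono step_down[OF m] sum_mono cluster_term[OF _ m(2)])
  also have "(\<Sum>C\<in>Cl U \<Delta> N x m. ?c) = real (card (Cl U \<Delta> N x m)) * ?c" by simp
  also have "\<dots> \<le> real (2 ^ ((2 * kk U \<Delta> + 1)^2)) * ?c"
    by (rule mult_right_mono[OF cc]) (intro mult_nonneg_nonneg W_nonneg, auto)
  also have "real (2 ^ ((2 * kk U \<Delta> + 1)^2)) * ?c = theta * exp (- \<beta> * \<Delta>) * W U \<Delta> N L \<beta> m"
    unfolding theta_def Kc_def by (simp add: algebra_simps)
  finally show ?thesis by (simp add: algebra_simps)
qed

lemma UB:
  assumes m: "1 \<le> m" "m \<le> n"
  shows "real m * W U \<Delta> N L \<beta> m \<le> real N * real N * W U \<Delta> N L \<beta> (m - 1)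
     + real N * real N * theta * exp (- \<beta> * \<Delta>) * W U \<Delta> N L \<beta> m"
proof -
  have "real m * W U \<Delta> N L \<beta> m = (\<Sum>x\<in>torus N. P U \<Delta> N L \<beta> m x)" by (rule total_P)
  also have "\<dots> \<le> (\<Sum>x\<in>torus N. W U \<Delta> N L \<beta> (m - 1)
     + (\<Sum>C\<in>Cl U \<Delta> N x m. exp (\<beta> * U * real (card (nn_pairs N C))) * W U \<Delta> N L \<beta> (m - card C)))"
    by (intro sum_mono P_bound[OF U bpos Npos Lodd Lbig Nbig])
  also have "\<dots> \<le> (\<Sum>x\<in>torus N. W U \<Delta> N L \<beta> (m - 1) + theta * exp (- \<beta> * \<Delta>) * W U \<Delta> N L \<beta> m)"
  proof (rule sum_mono)
    fix x :: "int \<times> int"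
    let ?c = "4 ^ kk U \<Delta> * exp (- \<beta> * eta U \<Delta>) * exp (- \<beta> * \<Delta>) * W U \<Delta> N L \<beta> m"
    have cc: "real (card (Cl U \<Delta> N x m)) \<le> real (2 ^ ((2 * kk U \<Delta> + 1)^2))"
      using card_Cl[OF Npos] by (simp only: of_nat_le_iff)
  have cc: "real (card (Cl U \<Delta> N x m)) \<le> real (2 ^ ((2 * kk U \<Delta> + 1)^2))"
    using card_Cl[OF Npos] by (simp only: of_nat_le_iff)
    have "(\<Sum>C\<in>Cl U \<Delta> N x m. exp (\<beta> * U * real (card (nn_pairs N C))) * W U \<Delta> N L \<beta> (m - card C))
      \<le> (\<Sum>C\<in>Cl U \<Delta> N x m. ?c)" by (intro sum_mono cluster_term[OF _ m(2)])
    also have "\<dots> = real (card (Cl U \<Delta> N x m)) * ?c" by simp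
    also have "\<dots> \<le> real (2 ^ ((2 * kk U \<Delta> + 1)^2)) * ?c"
      by (rule mult_right_mono[OF cc]) (intro mult_nonneg_nonneg W_nonneg, auto)
    also have "real (2 ^ ((2 * kk U \<Delta> + 1)^2)) * ?c = theta * exp (- \<beta> * \<Delta>) * W U \<Delta> N L \<beta> m"
      unfolding theta_def Kc_def by (simp add: algebra_simps)
    finally show "W U \<Delta> N L \<beta> (m - 1)
     + (\<Sum>C\<in>Cl U \<Delta> N x m. exp (\<beta> * U * real (card (nn_pairs N C))) * W U \<Delta> N L \<beta> (m - card C))
     \<le> W U \<Delta> N L \<beta> (m - 1) + theta * exp (- \<beta> * \<Delta>) * W U \<Delta> N L \<beta> m" by simp
  qed
  also have "\<dots> = real N * real N * (W U \<Delta> N L \<beta> (m - 1) + theta * exp (- \<beta> * \<Delta>) * W U \<Delta> N L \<beta> m)"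
    by (simp add: card_torus)
  finally show ?thesis by (simp add: algebra_simps)
qed


lemma card_box: "card (box N L x) \<le> L ^ 2"
proof -
  have "card (box N L x) \<le> nat (2 * ((int L - 1) div 2) + 1) ^ 2"
    unfolding box_tball by (rule card_tball[OF Npos]) (use Lodd in \<open>simp add: odd_pos\<close>)
  also have "2 * ((int L - 1) div 2) + 1 = int L"
  proof -
    have "even (int L - 1)" using Lodd by simp
    then show ?thesis by simp
  qed
  finally show ?thesis by simp
qed

lemma Zcheck_le: "Zcheck U \<Delta> N L \<beta> m \<le> W U \<Delta> N L \<beta> m"
  unfolding Zcheck_def W_def w_def[symmetric]
  by (rule sum_mono2[OF finite_Sset]) (auto simp: less_imp_le w_pos)

lemma Zcheck_ge:
  assumes m: "1 \<le> m" "m \<le> n"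
  shows "W U \<Delta> N L \<beta> m - Zcheck U \<Delta> N L \<beta> m
    \<le> real L ^ 2 * (2 * real m / (real N * real N) + theta * exp (- \<beta> * \<Delta>)) * W U \<Delta> N L \<beta> m"
proof -
  let ?S = "Sset U \<Delta> N L m"
  let ?B = "box N L (0, 0)"
  let ?w = "w U N \<beta>"
  let ?T1 = "{A\<in>?S. A \<subseteq> torus N - ?B}"
  let ?T2 = "{A\<in>?S. \<not> A \<subseteq> torus N - ?B}"
  have fB: "finite ?B" using finite_subset[OF _ finite_torus, of ?B] unfolding box_def by auto
  have "W U \<Delta> N L \<beta> m = (\<Sum>A\<in>?T1 \<union> ?T2. ?w A)" unfolding W_def
    by (rule sum.cong) auto
  also have "\<dots> = (\<Sum>A\<in>?T1. ?w A) + (\<Sum>A\<in>?T2. ?w A)"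
    by (rule sum.union_disjoint) (use finite_Sset in auto)
  also have "(\<Sum>A\<in>?T1. ?w A) = Zcheck U \<Delta> N L \<beta> m" unfolding Zcheck_def w_def ..
  finally have split: "W U \<Delta> N L \<beta> m - Zcheck U \<Delta> N L \<beta> m = (\<Sum>A\<in>?T2. ?w A)" by simp
  have "(\<Sum>A\<in>?T2. ?w A) \<le> (\<Sum>A\<in>?T2. real (card (A \<inter> ?B)) * ?w A)"
  proof (rule sum_mono)
    fix A assume A: "A \<in> ?T2"
    then have "A \<inter> ?B \<noteq> {}" unfolding Sset_iff by blast
    moreover have "finite (A \<inter> ?B)" using fB by simp
    ultimately have "card (A \<inter> ?B) \<ge> 1" by (simp add: Suc_le_eq card_gt_0_iff)
    then show "?w A \<le> real (card (A \<inter> ?B)) * ?w A"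
      using w_pos[of U N \<beta> A] by (simp add: mult_le_cancel_right1)
  qed
  also have "\<dots> \<le> (\<Sum>A\<in>?S. real (card (A \<inter> ?B)) * ?w A)"
    by (rule sum_mono2[OF finite_Sset]) (auto simp: less_imp_le w_pos)
  also have "\<dots> = (\<Sum>A\<in>?S. \<Sum>y\<in>{y\<in>?B. y \<in> A}. ?w A)"
  proof (rule sum.cong[OF refl])
    fix A show "real (card (A \<inter> ?B)) * ?w A = (\<Sum>y\<in>{y\<in>?B. y \<in> A}. ?w A)"
      by (simp add: Int_commute Collect_conj_eq inf_set_def[symmetric])
  qed
  also have "\<dots> = (\<Sum>y\<in>?B. \<Sum>A\<in>{A\<in>?S. y \<in> A}. ?w A)"
    by (rule sum.swap_restrict[OF finite_Sset fB])
  also have "\<dots> = (\<Sum>y\<in>?B. P U \<Delta> N L \<beta> m y)" unfolding P_def ..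
  also have "\<dots> \<le> (\<Sum>y\<in>?B. (2 * real m / (real N * real N) + theta * exp (- \<beta> * \<Delta>)) * W U \<Delta> N L \<beta> m)"
    by (intro sum_mono P_bound2[OF m])
  also have "\<dots> = real (card ?B) * ((2 * real m / (real N * real N) + theta * exp (- \<beta> * \<Delta>)) * W U \<Delta> N L \<beta> m)"
    by simp
  also have "\<dots> \<le> real L ^ 2 * ((2 * real m / (real N * real N) + theta * exp (- \<beta> * \<Delta>)) * W U \<Delta> N L \<beta> m)"
  proof (rule mult_right_mono)
    show "real (card ?B) \<le> real L ^ 2" using card_box[of "(0,0)"] by (metis of_nat_le_iff of_nat_power)
    show "0 \<le> (2 * real m / (real N * real N) + theta * exp (- \<beta> * \<Delta>)) * W U \<Delta> N L \<beta> m"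
      by (intro mult_nonneg_nonneg add_nonneg_nonneg W_nonneg) (auto simp: theta_def)
  qed
  finally show ?thesis using split by (simp add: mult.assoc)
qed


lemma W_zero: "W U \<Delta> N L \<beta> 0 = 1"
proof -
  have "Sset U \<Delta> N L 0 = {{}}"
  proof
    show "Sset U \<Delta> N L 0 \<subseteq> {{}}"
    proof
      fix A assume A: "A \<in> Sset U \<Delta> N L 0"
      then have "finite A" "card A = 0" using Sset_finite_mem[OF A] unfolding Sset_iff by auto
      then show "A \<in> {{}}" by simp
    qed
    show "{{}} \<subseteq> Sset U \<Delta> N L 0" by (simp add: Sset_iff)
  qed
  moreover have "nn_pairs N {} = {}" unfolding nn_pairs_def by auto
  ultimately show ?thesis unfolding W_def w_eq by simp
qed

lemma W_pos: "m \<le> n \<Longrightarrow> W U \<Delta> N L \<beta> m > 0"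
proof (induction m)
  case 0 then show ?case using W_zero by simp
next
  case (Suc m)
  have "W U \<Delta> N L \<beta> (Suc m - 1) \<le> (2 * real (Suc m) / (real N * real N)) * W U \<Delta> N L \<beta> (Suc m)"
    by (rule step_down) (use Suc.prems in auto)
  moreover have "W U \<Delta> N L \<beta> m > 0" using Suc by simp
  ultimately have a: "0 < (2 * real (Suc m) / (real N * real N)) * W U \<Delta> N L \<beta> (Suc m)" by simp
  have b: "2 * real (Suc m) / (real N * real N) > 0" using Npos by simp
  show ?case by (rule zero_less_mult_pos[OF a b])
qed

lemma ratio_upper:
  assumes m: "1 \<le> m" "m \<le> n"
  shows "(real N * real N - 4 * real n * real L ^ 2) * W U \<Delta> N L \<beta> (m - 1) \<le> real m * W U \<Delta> N L \<beta> m"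
proof -
  have L1: "L \<ge> 1" using Lodd by (cases L) auto
  have "real ((2 * L - 1)^2) \<le> 4 * real L ^ 2"
  proof -
    have "(2 * L - 1)^2 \<le> (2 * L)^2" by (rule power_mono) auto
    then have "real ((2 * L - 1)^2) \<le> real ((2 * L)^2)" by (rule of_nat_mono)
    then show ?thesis by (simp add: power_mult_distrib)
  qed
  then have "real (m - 1) * real ((2 * L - 1)^2) \<le> real n * (4 * real L ^ 2)"
    using m by (intro mult_mono) auto
  then have h: "real N * real N - 4 * real n * real L ^ 2 \<le> real (N * N) - real (m - 1) * real ((2 * L - 1)^2)"
    by simp
  have "(real N * real N - 4 * real n * real L ^ 2) * W U \<Delta> N L \<beta> (m - 1)
      \<le> (real (N * N) - real (m - 1) * real ((2 * L - 1)^2)) * W U \<Delta> N L \<beta> (m - 1)"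
    by (rule mult_right_mono[OF h W_nonneg])
  also have "\<dots> \<le> real m * W U \<Delta> N L \<beta> m" by (rule LB[OF U bpos Npos Lodd m(1)])
  finally show ?thesis .
qed

end




lemma div_lower:
  fixes a b \<rho> \<Lambda> m \<theta> :: real
  assumes "a > 0" "\<rho> > 0" "\<Lambda> > 0" "m * a \<le> \<Lambda> * b + \<Lambda> * \<theta> * \<rho> * a"
  shows "m / (\<rho> * \<Lambda>) - \<theta> \<le> b / (\<rho> * a)"
proof -
  have "m * a / (\<rho> * \<Lambda> * a) \<le> (\<Lambda> * b + \<Lambda> * \<theta> * \<rho> * a) / (\<rho> * \<Lambda> * a)"
    using assms by (intro divide_right_mono) auto
  also have "(\<Lambda> * b + \<Lambda> * \<theta> * \<rho> * a) / (\<rho> * \<Lambda> * a) = b / (\<rho> * a) + \<theta>"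
    using assms by (simp add: field_simps)
  also have "m * a / (\<rho> * \<Lambda> * a) = m / (\<rho> * \<Lambda>)" using assms by simp
  finally show ?thesis by simp
qed

lemma div_upper:
  fixes a b \<rho> \<Lambda> m c :: real
  assumes "a > 0" "\<rho> > 0" "\<Lambda> > 0" "c < 1" "(\<Lambda> - c * \<Lambda>) * b \<le> m * a"
  shows "b / (\<rho> * a) \<le> (m / (\<rho> * \<Lambda>)) / (1 - c)"
proof -
  have p: "\<Lambda> - c * \<Lambda> > 0" using assms by (simp add: algebra_simps)
  have "b \<le> m * a / (\<Lambda> - c * \<Lambda>)" using assms(5) p by (simp add: field_simps)
  then have "b / (\<rho> * a) \<le> m * a / (\<Lambda> - c * \<Lambda>) / (\<rho> * a)"
    using assms by (intro divide_right_mono) auto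
  also have "m * a / (\<Lambda> - c * \<Lambda>) / (\<rho> * a) = (m / (\<rho> * \<Lambda>)) / (1 - c)"
    using assms p by (simp add: field_simps)
  finally show ?thesis .
qed

lemma telescope:
  fixes f :: "nat \<Rightarrow> real"
  assumes "\<rho> > 0" "t \<le> n" "\<forall>j\<le>t. f (n - j) > 0"
  shows "(\<Prod>i<t. f (n - i - 1) / (\<rho> * f (n - i))) = f (n - t) / (\<rho> ^ t * f n)"
  using assms(2,3)
proof (induction t)
  case 0 then show ?case using assms by simp
next
  case (Suc t)
  have ft: "f (n - t) > 0" using Suc.prems by simp
  have fn: "f n > 0" using Suc.prems(2)[rule_format, of 0] by simp
  have "(\<Prod>i<Suc t. f (n - i - 1) / (\<rho> * f (n - i)))
      = f (n - t) / (\<rho> ^ t * f n) * (f (n - t - 1) / (\<rho> * f (n - t)))"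
    using Suc by simp
  also have "\<dots> = f (n - Suc t) / (\<rho> ^ Suc t * f n)"
    using ft fn assms(1) by (simp add: field_simps)
  finally show ?case .
qed

lemma exp_neg_top_lim:
  assumes "filterlim f at_top at_top"
  shows "((\<lambda>x. exp (- f x)) \<longlongrightarrow> (0::real)) at_top"
proof -
  have "filterlim (\<lambda>x. - f x) at_bot at_top" using assms filterlim_uminus_at_top by blast
  then show ?thesis by (rule filterlim_compose[OF exp_at_bot])
qed

lemma lin_top: "c > 0 \<Longrightarrow> filterlim (\<lambda>x::real. x * c) at_top at_top"
  by (rule filterlim_at_top_mult_tendsto_pos[OF tendsto_const]) (auto simp: filterlim_ident)

lemma ceil_bounds:
  fixes x :: real assumes "x \<ge> 0"
  shows "x \<le> real (nat \<lceil>x\<rceil>)" "real (nat \<lceil>x\<rceil>) \<le> x + 1"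
proof -
  have c0: "\<lceil>x\<rceil> \<ge> 0" using assms by simp
  have "real (nat \<lceil>x\<rceil>) = real_of_int \<lceil>x\<rceil>" using c0 by simp
  moreover have "x \<le> real_of_int \<lceil>x\<rceil>" by simp
  moreover have "real_of_int \<lceil>x\<rceil> < x + 1" using ceiling_correct[of x] by linarith
  ultimately show "x \<le> real (nat \<lceil>x\<rceil>)" "real (nat \<lceil>x\<rceil>) \<le> x + 1" by auto
qed

theorem lemmaB1:
  fixes U \<Delta> :: real and N L :: "real \<Rightarrow> nat" and \<delta> :: "real \<Rightarrow> real" and s :: nat
  assumes U_pos: "U > 0" and "U < \<Delta>" and "\<Delta> < 2 * U"
    and not_nat: "U / (2 * U - \<Delta>) \<notin> \<nat>"
    and N_odd: "\<forall>\<beta>. odd (N \<beta>)"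
    and dens: "filterlim (\<lambda>\<beta>. real (card (torus (N \<beta>))) * exp (- \<beta> * \<Delta>)) at_top at_top"
    and gam: "((\<lambda>\<beta>. real (card (torus (N \<beta>))) * exp (- \<beta> * Gamma_crit U \<Delta>)) \<longlongrightarrow> 0) at_top"
    and L_odd: "\<forall>\<beta>. odd (L \<beta>)"
    and L_sq: "\<forall>\<beta>. real (L \<beta>) ^ 2 = exp ((\<Delta> - \<delta> \<beta>) * \<beta>)"
    and \<delta>_lim: "(\<delta> \<longlongrightarrow> 0) at_top"
    and \<beta>\<delta>_lim: "filterlim (\<lambda>\<beta>. \<beta> * \<delta> \<beta>) at_top at_top"
  shows "\<exists>\<epsilon> :: real \<Rightarrow> real. (\<epsilon> \<longlongrightarrow> 0) at_top \<and>
    (\<forall>\<^sub>F \<beta> in at_top.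
       Zcheck U \<Delta> (N \<beta>) (L \<beta>) \<beta> (n_part \<Delta> (N \<beta>) \<beta> - s)
         / Zcan U (N \<beta>) \<beta> (n_part \<Delta> (N \<beta>) \<beta>)
       = exp (- \<beta> * \<Delta>) ^ s
         * mu_can U (N \<beta>) \<beta> (n_part \<Delta> (N \<beta>) \<beta>)
             (Sset U \<Delta> (N \<beta>) (L \<beta>) (n_part \<Delta> (N \<beta>) \<beta>))
         * (1 + \<epsilon> \<beta>))"
proof -
  define \<rho> where "\<rho> = (\<lambda>\<beta>::real. exp (- \<beta> * \<Delta>))"
  define \<Lambda> where "\<Lambda> = (\<lambda>\<beta>. real (N \<beta>) * real (N \<beta>))"
  define nn where "nn = (\<lambda>\<beta>. n_part \<Delta> (N \<beta>) \<beta>)"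
  define k where "k = kk U \<Delta>"
  define X where "X = (\<lambda>\<beta>. \<rho> \<beta> * \<Lambda> \<beta>)"
  have Upos: "U > 0" "U < \<Delta>" "\<Delta> < 2 * U" using assms by auto
  have cardT: "real (card (torus (N \<beta>))) = \<Lambda> \<beta>" for \<beta> unfolding \<Lambda>_def by (simp add: card_torus)
  have Xnn: "X \<beta> \<ge> 0" for \<beta> unfolding X_def \<rho>_def \<Lambda>_def by simp
  have X_top: "filterlim X at_top at_top"
  proof -
    have "X = (\<lambda>\<beta>. real (card (torus (N \<beta>))) * exp (- \<beta> * \<Delta>))"
      unfolding X_def \<rho>_def cardT by (simp add: fun_eq_iff mult.commute)
    then show ?thesis using dens by simp
  qed
  have nnX: "X \<beta> \<le> real (nn \<beta>)" "real (nn \<beta>) \<le> X \<beta> + 1" for \<beta>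
  proof -
    have e: "nn \<beta> = nat \<lceil>X \<beta>\<rceil>" unfolding nn_def n_part_def X_def \<rho>_def cardT by simp
    show "X \<beta> \<le> real (nn \<beta>)" "real (nn \<beta>) \<le> X \<beta> + 1" unfolding e using ceil_bounds[OF Xnn] by auto
  qed
  have evX1: "\<forall>\<^sub>F \<beta> in at_top. X \<beta> \<ge> 1" using X_top by (simp add: filterlim_at_top)
  have inv0: "((\<lambda>\<beta>. inverse (X \<beta>)) \<longlongrightarrow> 0) at_top" by (rule tendsto_inverse_0_at_top[OF X_top])
  have a_lim: "((\<lambda>\<beta>. real (nn \<beta>) / X \<beta>) \<longlongrightarrow> 1) at_top"
  proof (rule tendsto_sandwich[of "\<lambda>_. 1" _ _ "\<lambda>\<beta>. 1 + inverse (X \<beta>)"])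
    show "\<forall>\<^sub>F \<beta> in at_top. 1 \<le> real (nn \<beta>) / X \<beta>"
      using evX1 by eventually_elim (use nnX in simp)
    show "\<forall>\<^sub>F \<beta> in at_top. real (nn \<beta>) / X \<beta> \<le> 1 + inverse (X \<beta>)"
      using evX1 by eventually_elim (use nnX in \<open>simp add: field_simps\<close>)
    show "((\<lambda>_. 1) \<longlongrightarrow> (1::real)) at_top" by simp
    show "((\<lambda>\<beta>. 1 + inverse (X \<beta>)) \<longlongrightarrow> 1) at_top" using tendsto_add[OF tendsto_const inv0] by simp
  qed
  have nn_top: "filterlim (\<lambda>\<beta>. real (nn \<beta>)) at_top at_top"
    by (rule filterlim_at_top_mono[OF X_top]) (use nnX in simp)
  have b_lim: "((\<lambda>\<beta>. real (nn \<beta> - i) / X \<beta>) \<longlongrightarrow> 1) at_top" for i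
  proof -
    have ev: "\<forall>\<^sub>F \<beta> in at_top. real (nn \<beta>) / X \<beta> - real i * inverse (X \<beta>) = real (nn \<beta> - i) / X \<beta>"
    proof -
      have "\<forall>\<^sub>F \<beta> in at_top. real i \<le> real (nn \<beta>)" using nn_top unfolding filterlim_at_top by blast
      then show ?thesis
      proof eventually_elim
        case (elim \<beta>)
        then have "i \<le> nn \<beta>" by simp
        then show ?case by (simp add: of_nat_diff divide_inverse[symmetric] diff_divide_distrib)
      qed
    qed
    have "((\<lambda>\<beta>. real (nn \<beta>) / X \<beta> - real i * inverse (X \<beta>)) \<longlongrightarrow> 1 - real i * 0) at_top"
      by (intro tendsto_intros a_lim inv0)
    then show ?thesis using Lim_transform_eventually[OF _ ev] by simp
  qed
  have evb: "\<forall>\<^sub>F \<beta> in at_top. \<beta> \<ge> (0::real)" using eventually_ge_at_top[of "0::real"] by simp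
  have \<rho>pos: "\<rho> \<beta> > 0" for \<beta> unfolding \<rho>_def by simp
  have Lam_top: "filterlim \<Lambda> at_top at_top"
  proof (rule filterlim_at_top_mono[OF X_top])
    show "\<forall>\<^sub>F \<beta> in at_top. X \<beta> \<le> \<Lambda> \<beta>" using evb
    proof eventually_elim
      case (elim \<beta>)
      have "\<rho> \<beta> \<le> 1" unfolding \<rho>_def using elim Upos by simp
      moreover have "\<Lambda> \<beta> \<ge> 0" unfolding \<Lambda>_def by simp
      ultimately show ?case unfolding X_def using mult_right_mono[of "\<rho> \<beta>" 1 "\<Lambda> \<beta>"] by simp
    qed
  qed
  have evN: "\<forall>\<^sub>F \<beta> in at_top. k < N \<beta>"
  proof -
    have "\<forall>\<^sub>F \<beta> in at_top. real (k * k) + 1 \<le> \<Lambda> \<beta>" using Lam_top unfolding filterlim_at_top by blast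
    then show ?thesis
    proof eventually_elim
      case (elim \<beta>)
      show ?case
      proof (rule ccontr)
        assume "\<not> k < N \<beta>"
        then have "N \<beta> * N \<beta> \<le> k * k" by (simp add: mult_le_mono)
        then have "\<Lambda> \<beta> \<le> real (k * k)" unfolding \<Lambda>_def by (metis of_nat_le_iff of_nat_mult)
        then show False using elim by simp
      qed
    qed
  qed
  have Ltop: "filterlim (\<lambda>\<beta>. real (L \<beta>) ^ 2) at_top at_top"
  proof -
    have "filterlim (\<lambda>\<beta>. (\<Delta> - \<delta> \<beta>) * \<beta>) at_top at_top"
      by (rule filterlim_tendsto_pos_mult_at_top[OF tendsto_diff[OF tendsto_const \<delta>_lim]])
         (use Upos in \<open>simp_all add: filterlim_ident\<close>)
    then have "filterlim (\<lambda>\<beta>. exp ((\<Delta> - \<delta> \<beta>) * \<beta>)) at_top at_top"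
      by (rule filterlim_compose[OF exp_at_top])
    then show ?thesis using L_sq by simp
  qed
  have evL: "\<forall>\<^sub>F \<beta> in at_top. int k + 1 \<le> (int (L \<beta>) - 1) div 2"
  proof -
    have "\<forall>\<^sub>F \<beta> in at_top. real ((2 * k + 3)^2) \<le> real (L \<beta>) ^ 2" using Ltop unfolding filterlim_at_top by blast
    then show ?thesis
    proof eventually_elim
      case (elim \<beta>)
      then have "(2 * k + 3)^2 \<le> L \<beta> ^ 2" by (metis of_nat_le_iff of_nat_power)
      then have "2 * k + 3 \<le> L \<beta>" using power2_le_imp_le by blast
      then show ?case by linarith
    qed
  qed
  have rL: "((\<lambda>\<beta>. \<rho> \<beta> * real (L \<beta>) ^ 2) \<longlongrightarrow> 0) at_top"
  proof -
    have e: "\<rho> \<beta> * real (L \<beta>) ^ 2 = exp (- (\<beta> * \<delta> \<beta>))" for \<beta>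
      unfolding \<rho>_def L_sq[rule_format] by (simp add: exp_add[symmetric] algebra_simps)
    show ?thesis unfolding e by (rule exp_neg_top_lim[OF \<beta>\<delta>_lim])
  qed
  define c where "c = (\<lambda>\<beta>. 4 * real (nn \<beta>) * real (L \<beta>) ^ 2 / \<Lambda> \<beta>)"
  have c_lim: "(c \<longlongrightarrow> 0) at_top"
  proof -
    have ev: "\<forall>\<^sub>F \<beta> in at_top. 4 * (real (nn \<beta>) / X \<beta>) * (\<rho> \<beta> * real (L \<beta>) ^ 2) = c \<beta>"
      using evX1
    proof eventually_elim
      case (elim \<beta>)
      then have "\<Lambda> \<beta> > 0" using \<rho>pos[of \<beta>] unfolding X_def
        by (metis le_numeral_extra(2) linorder_not_le mult_nonneg_nonpos order_trans less_imp_le \<open>\<And>\<beta>. 0 < \<rho> \<beta>\<close> \<Lambda>_def zero_le_square)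
      then show ?case unfolding c_def X_def using \<rho>pos[of \<beta>] by (simp add: field_simps)
    qed
    have "((\<lambda>\<beta>. 4 * (real (nn \<beta>) / X \<beta>) * (\<rho> \<beta> * real (L \<beta>) ^ 2)) \<longlongrightarrow> 4 * 1 * 0) at_top"
      by (intro tendsto_intros a_lim rL)
    then show ?thesis using Lim_transform_eventually[OF _ ev] by simp
  qed
  define \<theta> where "\<theta> = (\<lambda>\<beta>. real (Kc U \<Delta>) * exp (- \<beta> * eta U \<Delta>))"
  have th_lim: "(\<theta> \<longlongrightarrow> 0) at_top"
  proof -
    have "((\<lambda>\<beta>. exp (- (\<beta> * eta U \<Delta>))) \<longlongrightarrow> 0) at_top"
      by (rule exp_neg_top_lim[OF lin_top]) (use lc_facts[OF Upos] in simp)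
    then have "((\<lambda>\<beta>. real (Kc U \<Delta>) * exp (- (\<beta> * eta U \<Delta>))) \<longlongrightarrow> real (Kc U \<Delta>) * 0) at_top"
      by (intro tendsto_intros)
    then show ?thesis unfolding \<theta>_def by simp
  qed
  define Wf where "Wf = (\<lambda>\<beta> m. W U \<Delta> (N \<beta>) (L \<beta>) \<beta> m)"
  define good where "good = (\<lambda>\<beta>. \<beta> \<ge> 0 \<and> k < N \<beta> \<and> int k + 1 \<le> (int (L \<beta>) - 1) div 2
      \<and> c \<beta> \<le> 1/2 \<and> X \<beta> \<ge> 1 \<and> s + 1 \<le> nn \<beta>)"
  have evgood: "\<forall>\<^sub>F \<beta> in at_top. good \<beta>"
  proof -
    have e1: "\<forall>\<^sub>F \<beta> in at_top. c \<beta> < 1/2" using order_tendstoD(2)[OF c_lim, of "1/2"] by simp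
    have e2: "\<forall>\<^sub>F \<beta> in at_top. real (s + 1) \<le> real (nn \<beta>)" using nn_top unfolding filterlim_at_top by blast
    show ?thesis using evb evN evL e1 evX1 e2 unfolding good_def
      by eventually_elim (simp only: of_nat_le_iff, auto)
  qed
  have ctx: "\<beta> \<ge> 0 \<and> N \<beta> > 0 \<and> kk U \<Delta> < N \<beta> \<and> int (kk U \<Delta>) + 1 \<le> (int (L \<beta>) - 1) div 2
     \<and> 8 * real (nn \<beta>) * real (L \<beta>) ^ 2 \<le> real (N \<beta>) * real (N \<beta>)
     \<and> real (nn \<beta>) \<le> 2 * exp (- \<beta> * \<Delta>) * (real (N \<beta>) * real (N \<beta>))
     \<and> \<Lambda> \<beta> > 0 \<and> s + 1 \<le> nn \<beta> \<and> c \<beta> \<le> 1/2 \<and> X \<beta> \<ge> 1" if g: "good \<beta>" for \<beta>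
  proof -
    have N0: "N \<beta> > 0" using g unfolding good_def by auto
    have Lp: "\<Lambda> \<beta> > 0" using N0 unfolding \<Lambda>_def by simp
    have "c \<beta> \<le> 1/2" using g unfolding good_def by auto
    then have A1: "8 * real (nn \<beta>) * real (L \<beta>) ^ 2 \<le> \<Lambda> \<beta>" using Lp unfolding c_def by (simp add: field_simps)
    have "real (nn \<beta>) \<le> X \<beta> + 1" by (rule nnX(2))
    moreover have "X \<beta> \<ge> 1" using g unfolding good_def by auto
    ultimately have A2: "real (nn \<beta>) \<le> 2 * exp (- \<beta> * \<Delta>) * (real (N \<beta>) * real (N \<beta>))"
      unfolding X_def \<rho>_def \<Lambda>_def by simp
    show ?thesis using g N0 Lp A1 A2 unfolding good_def k_def \<Lambda>_def by auto
  qed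
  define r where "r = (\<lambda>i \<beta>. Wf \<beta> (nn \<beta> - i - 1) / (\<rho> \<beta> * Wf \<beta> (nn \<beta> - i)))"
  have r_lim: "((r i) \<longlongrightarrow> 1) at_top" if i: "i < s" for i
  proof (rule tendsto_sandwich[of "\<lambda>\<beta>. real (nn \<beta> - i) / X \<beta> - \<theta> \<beta>" _ _
        "\<lambda>\<beta>. (real (nn \<beta> - i) / X \<beta>) / (1 - c \<beta>)"])
    show "\<forall>\<^sub>F \<beta> in at_top. real (nn \<beta> - i) / X \<beta> - \<theta> \<beta> \<le> r i \<beta>" using evgood
    proof eventually_elim
      case (elim \<beta>)
      note C = ctx[OF elim]
      have m: "1 \<le> nn \<beta> - i" "nn \<beta> - i \<le> nn \<beta>" using C i by auto
      have Wp: "Wf \<beta> (nn \<beta> - i) > 0" unfolding Wf_def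
        by (rule W_pos[where U=U and \<Delta>=\<Delta> and \<beta>=\<beta> and N="N \<beta>" and L="L \<beta>" and n="nn \<beta>"]) (use C L_odd Upos m in auto)
      have ub: "real (nn \<beta> - i) * Wf \<beta> (nn \<beta> - i) \<le> \<Lambda> \<beta> * Wf \<beta> (nn \<beta> - i - 1)
          + \<Lambda> \<beta> * \<theta> \<beta> * \<rho> \<beta> * Wf \<beta> (nn \<beta> - i)"
      proof -
        have th: "theta U \<Delta> \<beta> = \<theta> \<beta>"
          unfolding \<theta>_def by (rule theta_def[where U=U and \<Delta>=\<Delta> and \<beta>=\<beta> and N="N \<beta>" and L="L \<beta>" and n="nn \<beta>"]) (use C L_odd Upos in auto)
        have "real (nn \<beta> - i) * W U \<Delta> (N \<beta>) (L \<beta>) \<beta> (nn \<beta> - i) \<le> real (N \<beta>) * real (N \<beta>) * W U \<Delta> (N \<beta>) (L \<beta>) \<beta> (nn \<beta> - i - 1)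
     + real (N \<beta>) * real (N \<beta>) * theta U \<Delta> \<beta> * exp (- \<beta> * \<Delta>) * W U \<Delta> (N \<beta>) (L \<beta>) \<beta> (nn \<beta> - i)"
          by (rule UB[where U=U and \<Delta>=\<Delta> and \<beta>=\<beta> and N="N \<beta>" and L="L \<beta>" and n="nn \<beta>"]) (use C L_odd Upos m in auto)
        then show ?thesis unfolding Wf_def \<Lambda>_def \<rho>_def th .
      qed
      have "real (nn \<beta> - i) / (\<rho> \<beta> * \<Lambda> \<beta>) - \<theta> \<beta> \<le> Wf \<beta> (nn \<beta> - i - 1) / (\<rho> \<beta> * Wf \<beta> (nn \<beta> - i))"
        by (rule div_lower[OF Wp \<rho>pos _ ub]) (use C in simp)
      then show ?case unfolding r_def X_def .
    qed
    show "\<forall>\<^sub>F \<beta> in at_top. r i \<beta> \<le> (real (nn \<beta> - i) / X \<beta>) / (1 - c \<beta>)" using evgood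
    proof eventually_elim
      case (elim \<beta>)
      note C = ctx[OF elim]
      have m: "1 \<le> nn \<beta> - i" "nn \<beta> - i \<le> nn \<beta>" using C i by auto
      have Wp: "Wf \<beta> (nn \<beta> - i) > 0" unfolding Wf_def
        by (rule W_pos[where U=U and \<Delta>=\<Delta> and \<beta>=\<beta> and N="N \<beta>" and L="L \<beta>" and n="nn \<beta>"]) (use C L_odd Upos m in auto)
      have ru: "(\<Lambda> \<beta> - c \<beta> * \<Lambda> \<beta>) * Wf \<beta> (nn \<beta> - i - 1) \<le> real (nn \<beta> - i) * Wf \<beta> (nn \<beta> - i)"
      proof -
        have "c \<beta> * \<Lambda> \<beta> = 4 * real (nn \<beta>) * real (L \<beta>) ^ 2" unfolding c_def using C by simp
        moreover have "(real (N \<beta>) * real (N \<beta>) - 4 * real (nn \<beta>) * real (L \<beta>) ^ 2) * W U \<Delta> (N \<beta>) (L \<beta>) \<beta> (nn \<beta> - i - 1)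
          \<le> real (nn \<beta> - i) * W U \<Delta> (N \<beta>) (L \<beta>) \<beta> (nn \<beta> - i)"
          by (rule ratio_upper[where U=U and \<Delta>=\<Delta> and \<beta>=\<beta> and N="N \<beta>" and L="L \<beta>" and n="nn \<beta>"]) (use C L_odd Upos m in auto)
        ultimately show ?thesis unfolding Wf_def \<Lambda>_def by simp
      qed
      have "Wf \<beta> (nn \<beta> - i - 1) / (\<rho> \<beta> * Wf \<beta> (nn \<beta> - i)) \<le> (real (nn \<beta> - i) / (\<rho> \<beta> * \<Lambda> \<beta>)) / (1 - c \<beta>)"
        by (rule div_upper[OF Wp \<rho>pos _ _ ru]) (use C in simp_all)
      then show ?case unfolding r_def X_def .
    qed
    have "((\<lambda>\<beta>. real (nn \<beta> - i) / X \<beta> - \<theta> \<beta>) \<longlongrightarrow> 1 - 0) at_top"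
      by (intro tendsto_intros b_lim th_lim)
    then show "((\<lambda>\<beta>. real (nn \<beta> - i) / X \<beta> - \<theta> \<beta>) \<longlongrightarrow> 1) at_top" by simp
    have "((\<lambda>\<beta>. (real (nn \<beta> - i) / X \<beta>) / (1 - c \<beta>)) \<longlongrightarrow> 1 / (1 - 0)) at_top"
      by (intro tendsto_intros b_lim c_lim) simp
    then show "((\<lambda>\<beta>. (real (nn \<beta> - i) / X \<beta>) / (1 - c \<beta>)) \<longlongrightarrow> 1) at_top" by simp
  qed
  define R where "R = (\<lambda>\<beta>. \<Prod>i<s. r i \<beta>)"
  have R_lim: "(R \<longlongrightarrow> 1) at_top"
  proof -
    have "(R \<longlongrightarrow> (\<Prod>i<s. (1::real))) at_top" unfolding R_def
      by (rule tendsto_prod) (use r_lim in auto)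
    then show ?thesis by simp
  qed
  have Wpos_all: "Wf \<beta> m > 0" if g: "good \<beta>" and m: "m \<le> nn \<beta>" for \<beta> m
  proof -
    note C = ctx[OF g]
    show ?thesis unfolding Wf_def by (rule W_pos[where U=U and \<Delta>=\<Delta> and \<beta>=\<beta> and N="N \<beta>" and L="L \<beta>" and n="nn \<beta>"]) (use C L_odd Upos m in auto)
  qed
  have tele: "\<forall>\<^sub>F \<beta> in at_top. R \<beta> = Wf \<beta> (nn \<beta> - s) / (\<rho> \<beta> ^ s * Wf \<beta> (nn \<beta>))" using evgood
  proof eventually_elim
    case (elim \<beta>)
    note C = ctx[OF elim]
    show ?case unfolding R_def r_def
      by (rule telescope[OF \<rho>pos]) (use C Wpos_all[OF elim] in auto)
  qed
  define q where "q = (\<lambda>\<beta>. Zcheck U \<Delta> (N \<beta>) (L \<beta>) \<beta> (nn \<beta> - s) / Wf \<beta> (nn \<beta> - s))"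
  have q_lim: "(q \<longlongrightarrow> 1) at_top"
  proof (rule tendsto_sandwich[of "\<lambda>\<beta>. 1 - \<rho> \<beta> * real (L \<beta>) ^ 2 * (2 * (real (nn \<beta>) / X \<beta>) + \<theta> \<beta>)" _ _ "\<lambda>_. 1"])
    show "\<forall>\<^sub>F \<beta> in at_top. q \<beta> \<le> 1" using evgood
    proof eventually_elim
      case (elim \<beta>)
      note C = ctx[OF elim]
      have Wp: "Wf \<beta> (nn \<beta> - s) > 0" by (rule Wpos_all[OF elim]) simp
      have "Zcheck U \<Delta> (N \<beta>) (L \<beta>) \<beta> (nn \<beta> - s) \<le> Wf \<beta> (nn \<beta> - s)"
        unfolding Wf_def by (rule Zcheck_le[where U=U and \<Delta>=\<Delta> and \<beta>=\<beta> and N="N \<beta>" and L="L \<beta>" and n="nn \<beta>"]) (use C L_odd Upos in auto)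
      then show ?case unfolding q_def using Wp by simp
    qed
    show "\<forall>\<^sub>F \<beta> in at_top. 1 - \<rho> \<beta> * real (L \<beta>) ^ 2 * (2 * (real (nn \<beta>) / X \<beta>) + \<theta> \<beta>) \<le> q \<beta>"
      using evgood
    proof eventually_elim
      case (elim \<beta>)
      note C = ctx[OF elim]
      have Wp: "Wf \<beta> (nn \<beta> - s) > 0" by (rule Wpos_all[OF elim]) simp
      have m: "1 \<le> nn \<beta> - s" "nn \<beta> - s \<le> nn \<beta>" using C by auto
      have th: "theta U \<Delta> \<beta> = \<theta> \<beta>"
        unfolding \<theta>_def by (rule theta_def[where U=U and \<Delta>=\<Delta> and \<beta>=\<beta> and N="N \<beta>" and L="L \<beta>" and n="nn \<beta>"]) (use C L_odd Upos in auto)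
      have zg: "Wf \<beta> (nn \<beta> - s) - Zcheck U \<Delta> (N \<beta>) (L \<beta>) \<beta> (nn \<beta> - s)
         \<le> real (L \<beta>) ^ 2 * (2 * real (nn \<beta> - s) / \<Lambda> \<beta> + \<theta> \<beta> * \<rho> \<beta>) * Wf \<beta> (nn \<beta> - s)"
        unfolding Wf_def \<Lambda>_def \<rho>_def th[symmetric]
        by (rule Zcheck_ge[where U=U and \<Delta>=\<Delta> and \<beta>=\<beta> and N="N \<beta>" and L="L \<beta>" and n="nn \<beta>"]) (use C L_odd Upos m in auto)
      have le: "real (L \<beta>) ^ 2 * (2 * real (nn \<beta> - s) / \<Lambda> \<beta> + \<theta> \<beta> * \<rho> \<beta>)
          \<le> \<rho> \<beta> * real (L \<beta>) ^ 2 * (2 * (real (nn \<beta>) / X \<beta>) + \<theta> \<beta>)"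
      proof -
        have Lp: "\<Lambda> \<beta> > 0" using C by simp
        have "real (nn \<beta> - s) \<le> real (nn \<beta>)" by simp
        then have "2 * real (nn \<beta> - s) / \<Lambda> \<beta> \<le> \<rho> \<beta> * (2 * (real (nn \<beta>) / X \<beta>))"
          unfolding X_def using Lp \<rho>pos[of \<beta>] by (simp add: field_simps)
        then have "2 * real (nn \<beta> - s) / \<Lambda> \<beta> + \<theta> \<beta> * \<rho> \<beta> \<le> \<rho> \<beta> * (2 * (real (nn \<beta>) / X \<beta>) + \<theta> \<beta>)"
          by (simp add: algebra_simps)
        then have "real (L \<beta>) ^ 2 * (2 * real (nn \<beta> - s) / \<Lambda> \<beta> + \<theta> \<beta> * \<rho> \<beta>)
            \<le> real (L \<beta>) ^ 2 * (\<rho> \<beta> * (2 * (real (nn \<beta>) / X \<beta>) + \<theta> \<beta>))"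
          by (rule mult_left_mono) simp
        also have "\<dots> = \<rho> \<beta> * real (L \<beta>) ^ 2 * (2 * (real (nn \<beta>) / X \<beta>) + \<theta> \<beta>)"
          by (simp only: ac_simps)
        finally show ?thesis .
      qed
      have "1 - \<rho> \<beta> * real (L \<beta>) ^ 2 * (2 * (real (nn \<beta>) / X \<beta>) + \<theta> \<beta>)
          \<le> 1 - real (L \<beta>) ^ 2 * (2 * real (nn \<beta> - s) / \<Lambda> \<beta> + \<theta> \<beta> * \<rho> \<beta>)" using le by simp
      also have "\<dots> \<le> q \<beta>" unfolding q_def using zg Wp by (simp add: field_simps)
      finally show ?case .
    qed
    have "((\<lambda>\<beta>. 1 - \<rho> \<beta> * real (L \<beta>) ^ 2 * (2 * (real (nn \<beta>) / X \<beta>) + \<theta> \<beta>)) \<longlongrightarrow> 1 - 0 * (2 * 1 + 0)) at_top"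
      by (intro tendsto_intros rL a_lim th_lim)
    then show "((\<lambda>\<beta>. 1 - \<rho> \<beta> * real (L \<beta>) ^ 2 * (2 * (real (nn \<beta>) / X \<beta>) + \<theta> \<beta>)) \<longlongrightarrow> 1) at_top" by simp
    show "((\<lambda>_. 1) \<longlongrightarrow> (1::real)) at_top" by simp
  qed
  define \<epsilon> where "\<epsilon> = (\<lambda>\<beta>. Zcheck U \<Delta> (N \<beta>) (L \<beta>) \<beta> (nn \<beta> - s) / (\<rho> \<beta> ^ s * Wf \<beta> (nn \<beta>)) - 1)"
  show ?thesis
  proof (intro exI[of _ \<epsilon>] conjI)
    have ev: "\<forall>\<^sub>F \<beta> in at_top. q \<beta> * R \<beta> - 1 = \<epsilon> \<beta>" using evgood tele
    proof eventually_elim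
      case (elim \<beta>)
      have Wp: "Wf \<beta> (nn \<beta> - s) > 0" by (rule Wpos_all[OF elim(1)]) simp
      show ?case unfolding q_def \<epsilon>_def elim(2) using Wp by simp
    qed
    have "((\<lambda>\<beta>. q \<beta> * R \<beta> - 1) \<longlongrightarrow> 1 * 1 - 1) at_top" by (intro tendsto_intros q_lim R_lim)
    then show "(\<epsilon> \<longlongrightarrow> 0) at_top" using Lim_transform_eventually[OF _ ev] by simp
    show "\<forall>\<^sub>F \<beta> in at_top.
       Zcheck U \<Delta> (N \<beta>) (L \<beta>) \<beta> (n_part \<Delta> (N \<beta>) \<beta> - s)
         / Zcan U (N \<beta>) \<beta> (n_part \<Delta> (N \<beta>) \<beta>)
       = exp (- \<beta> * \<Delta>) ^ s
         * mu_can U (N \<beta>) \<beta> (n_part \<Delta> (N \<beta>) \<beta>)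
             (Sset U \<Delta> (N \<beta>) (L \<beta>) (n_part \<Delta> (N \<beta>) \<beta>))
         * (1 + \<epsilon> \<beta>)" using evgood
    proof eventually_elim
      case (elim \<beta>)
      have Wp: "Wf \<beta> (nn \<beta>) > 0" by (rule Wpos_all[OF elim]) simp
      have mu: "mu_can U (N \<beta>) \<beta> (nn \<beta>) (Sset U \<Delta> (N \<beta>) (L \<beta>) (nn \<beta>)) = Wf \<beta> (nn \<beta>) / Zcan U (N \<beta>) \<beta> (nn \<beta>)"
      proof -
        have "Sset U \<Delta> (N \<beta>) (L \<beta>) (nn \<beta>) \<inter> configs (N \<beta>) (nn \<beta>) = Sset U \<Delta> (N \<beta>) (L \<beta>) (nn \<beta>)"
          unfolding Sset_def by blast
        then show ?thesis unfolding mu_can_def Wf_def W_def w_def by simp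
      qed
      have rp: "\<rho> \<beta> ^ s > 0" using \<rho>pos by simp
      have nb: "n_part \<Delta> (N \<beta>) \<beta> = nn \<beta>" by (simp add: nn_def)
      have rb: "exp (- \<beta> * \<Delta>) = \<rho> \<beta>" by (simp add: \<rho>_def)
      show ?case unfolding nb rb mu \<epsilon>_def using Wp rp \<rho>pos[of \<beta>]
        by (cases "Zcan U (N \<beta>) \<beta> (nn \<beta>) = 0") (simp_all add: field_simps)
    qed
  qed
qed



end
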